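(* Let $\{\ket{\Phi_b}\}_{b=1}^{2^{n+m}}$ be a stabilizer basis of $\mathcal{H}_n\otimes\mathcal{H}_m$, let $\ket\psi\in\mathcal{H}_m$ be an arbitrary unit vector, let $\mu_b=(I\otimes\bra\psi)\ket{\Phi_b}\!\bra{\Phi_b}(I\otimes\ket\psi)$, and let $p$ be the entanglement entropy of the states $\ket{\Phi_b}$ across $\mathcal{H}_n|\mathcal{H}_m$. Then $s_{\boldsymbol\mu}=k\,2^{n-p}$ for some $k\in\mathbb{N}$.
   Context: $\mathcal{H}_n=(\mathbb{C}^2)^{\otimes n}$ (data qubits), $\mathcal{H}_m=(\mathbb{C}^2)^{\otimes m}$ (ancilla qubits). A stabilizer basis of $k$ qubits is the orthonormal basis of common eigenvectors of $k$ independent pairwise commuting Pauli operators. The entanglement entropy is the von Neumann entropy (base 2) of the reduced state on $\mathcal{H}_n$; for a stabilizer basis it is an integer $p$, the same for all basis elements. $s_{\boldsymbol\mu}=\dim\operatorname{span}(\{\mu_b\})$ (complex linear span of operators on $\mathcal{H}_n$). *)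

theory Defs
  imports "HOL-Library.Function_Algebras" "Jordan_Normal_Form.Char_Poly"
begin

(* A state / vector on N qubits is a function nat => complex supported on {..<2^N};
   an operator on N qubits is a function nat => nat => complex (matrix entries),
   supported on {..<2^N} x {..<2^N}.
   H_n (x) H_m is identified with C^(2^(n+m)) via index a * 2^m + c,
   a < 2^n (data part), c < 2^m (ancilla part). *)

definition qbit :: "nat \<Rightarrow> nat \<Rightarrow> nat" where
  "qbit i k = i div 2 ^ k mod 2"

datatype pauli1 = PI | PX | PY | PZ

fun pauli1_entry :: "pauli1 \<Rightarrow> nat \<Rightarrow> nat \<Rightarrow> complex" where
  "pauli1_entry PI r s = (if r = s then 1 else 0)"
| "pauli1_entry PX r s = (if r \<noteq> s then 1 else 0)"
| "pauli1_entry PY r s = (if r = s then 0 else if r = 0 then - \<i> else \<i>)"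
| "pauli1_entry PZ r s = (if r = s then (if r = 0 then 1 else -1) else 0)"

definition pauli_op :: "nat \<Rightarrow> complex \<Rightarrow> (nat \<Rightarrow> pauli1) \<Rightarrow> nat \<Rightarrow> nat \<Rightarrow> complex" where
  "pauli_op N c ps = (\<lambda>i j. if i < 2 ^ N \<and> j < 2 ^ N
      then c * (\<Prod>k<N. pauli1_entry (ps k) (qbit i k) (qbit j k)) else 0)"

definition is_pauli :: "nat \<Rightarrow> (nat \<Rightarrow> nat \<Rightarrow> complex) \<Rightarrow> bool" where
  "is_pauli N P \<longleftrightarrow> (\<exists>c ps. c \<in> {1, -1, \<i>, -\<i>} \<and> P = pauli_op N c ps)"

definition ident :: "nat \<Rightarrow> nat \<Rightarrow> nat \<Rightarrow> complex" where
  "ident N = (\<lambda>i j. if i < 2 ^ N \<and> i = j then 1 else 0)"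

definition mmult :: "nat \<Rightarrow> (nat \<Rightarrow> nat \<Rightarrow> complex) \<Rightarrow> (nat \<Rightarrow> nat \<Rightarrow> complex) \<Rightarrow> nat \<Rightarrow> nat \<Rightarrow> complex" where
  "mmult N A B = (\<lambda>i j. \<Sum>k<2 ^ N. A i k * B k j)"

fun mprod_list :: "nat \<Rightarrow> (nat \<Rightarrow> nat \<Rightarrow> complex) list \<Rightarrow> nat \<Rightarrow> nat \<Rightarrow> complex" where
  "mprod_list N [] = ident N"
| "mprod_list N (A # As) = mmult N A (mprod_list N As)"

definition mvmult :: "nat \<Rightarrow> (nat \<Rightarrow> nat \<Rightarrow> complex) \<Rightarrow> (nat \<Rightarrow> complex) \<Rightarrow> nat \<Rightarrow> complex" where
  "mvmult N A v = (\<lambda>i. \<Sum>j<2 ^ N. A i j * v j)"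

definition cinner :: "nat \<Rightarrow> (nat \<Rightarrow> complex) \<Rightarrow> (nat \<Rightarrow> complex) \<Rightarrow> complex" where
  "cinner N u v = (\<Sum>i<2 ^ N. cnj (u i) * v i)"

definition is_vec :: "nat \<Rightarrow> (nat \<Rightarrow> complex) \<Rightarrow> bool" where
  "is_vec N v \<longleftrightarrow> (\<forall>i\<ge>2 ^ N. v i = 0)"

(* Paulis P_0..P_{k-1} on N qubits are independent: no nonempty sub-product is
   proportional to the identity (they generate a group of order 2^k modulo phases). *)
definition independent_paulis :: "nat \<Rightarrow> nat \<Rightarrow> (nat \<Rightarrow> nat \<Rightarrow> nat \<Rightarrow> complex) \<Rightarrow> bool" where
  "independent_paulis N k P \<longleftrightarrow>
     (\<forall>S. S \<subseteq> {..<k} \<and> S \<noteq> {} \<longrightarrow>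
        \<not> (\<exists>c. mprod_list N (map P (sorted_list_of_set S)) = (\<lambda>i j. c * ident N i j)))"

definition stabilizer_basis :: "nat \<Rightarrow> (nat \<Rightarrow> nat \<Rightarrow> complex) \<Rightarrow> bool" where
  "stabilizer_basis N Phi \<longleftrightarrow>
     (\<exists>P. (\<forall>l<N. is_pauli N (P l))
        \<and> (\<forall>l<N. \<forall>l'<N. mmult N (P l) (P l') = mmult N (P l') (P l))
        \<and> independent_paulis N N P
        \<and> (\<forall>b<2 ^ N. is_vec N (Phi b))
        \<and> (\<forall>b<2 ^ N. \<forall>b'<2 ^ N. cinner N (Phi b) (Phi b') = (if b = b' then 1 else 0))
        \<and> (\<forall>b<2 ^ N. \<forall>l<N. \<exists>lam. mvmult N (P l) (Phi b) = (\<lambda>i. lam * Phi b i)))"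

(* (I \<otimes> \<langle>psi|) |Phi\<rangle>, a vector of H_n *)
definition partial_bra :: "nat \<Rightarrow> nat \<Rightarrow> (nat \<Rightarrow> complex) \<Rightarrow> (nat \<Rightarrow> complex) \<Rightarrow> nat \<Rightarrow> complex" where
  "partial_bra n m psi Phi = (\<lambda>a. if a < 2 ^ n then (\<Sum>c<2 ^ m. cnj (psi c) * Phi (a * 2 ^ m + c)) else 0)"

definition outer :: "(nat \<Rightarrow> complex) \<Rightarrow> (nat \<Rightarrow> complex) \<Rightarrow> nat \<Rightarrow> nat \<Rightarrow> complex" where
  "outer u v = (\<lambda>i j. u i * cnj (v j))"

definition mu_op :: "nat \<Rightarrow> nat \<Rightarrow> (nat \<Rightarrow> complex) \<Rightarrow> (nat \<Rightarrow> complex) \<Rightarrow> nat \<Rightarrow> nat \<Rightarrow> complex" where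
  "mu_op n m psi Phi = outer (partial_bra n m psi Phi) (partial_bra n m psi Phi)"

definition reduced_state :: "nat \<Rightarrow> nat \<Rightarrow> (nat \<Rightarrow> complex) \<Rightarrow> complex mat" where
  "reduced_state n m Phi = mat (2 ^ n) (2 ^ n)
     (\<lambda>(a, a'). \<Sum>c<2 ^ m. Phi (a * 2 ^ m + c) * cnj (Phi (a' * 2 ^ m + c)))"

(* von Neumann entropy (base 2): - sum over eigenvalues (with algebraic multiplicity)
   lam log2 lam, with 0 log 0 = 0. *)
definition vn_entropy :: "complex mat \<Rightarrow> real" where
  "vn_entropy A = - (\<Sum>lam\<in>{lam. poly (char_poly A) lam = 0 \<and> lam \<noteq> 0}.
       real (order lam (char_poly A)) * Re lam * log 2 (Re lam))"

definition entanglement_entropy :: "nat \<Rightarrow> nat \<Rightarrow> (nat \<Rightarrow> complex) \<Rightarrow> real" where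
  "entanglement_entropy n m Phi = vn_entropy (reduced_state n m Phi)"

definition cscale :: "complex \<Rightarrow> (nat \<Rightarrow> nat \<Rightarrow> complex) \<Rightarrow> nat \<Rightarrow> nat \<Rightarrow> complex" where
  "cscale c A = (\<lambda>i j. c * A i j)"

definition span_dim :: "(nat \<Rightarrow> nat \<Rightarrow> complex) set \<Rightarrow> nat" where
  "span_dim S = vector_space.dim cscale S"

end

theory Submission
  imports Defs "Jordan_Normal_Form.Schur_Decomposition"
begin

lemma qbit_lt2: "qbit i k < 2" by (simp add: qbit_def)
lemma qbit_cases: "qbit i k = 0 \<or> qbit i k = 1" using qbit_lt2[of i k] by linarith

lemma div_add_pow: "(j + 2 ^ k * X) div 2 ^ k = j div 2 ^ k + (X::nat)"
  by simp

lemma qbit_high: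
  assumes "j < 2 ^ N" "t < 2" "k \<le> N"
  shows "qbit (j + 2 ^ N * t) k = (if k < N then qbit j k else t)"
proof (cases "k < N")
  case True
  then obtain d where d: "N = k + Suc d" using less_imp_Suc_add[OF True] by auto
  have e: "j + 2 ^ N * t = j + 2 ^ k * (2 * (2 ^ d * t))"
    by (simp add: d power_add mult.assoc)
  have "(j + 2 ^ N * t) div 2 ^ k = j div 2 ^ k + 2 * (2 ^ d * t)"
    unfolding e by (rule div_add_pow)
  then show ?thesis using True by (simp add: qbit_def)
next
  case False
  then have "k = N" using assms by simp
  then show ?thesis using assms by (simp add: qbit_def)
qed

lemma sum_bits:
  fixes f :: "nat \<Rightarrow> nat \<Rightarrow> 'a :: comm_semiring_1"
  shows "(\<Sum>j<2 ^ N. \<Prod>k<N. f k (qbit j k)) = (\<Prod>k<N. f k 0 + f k 1)"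
proof (induction N arbitrary: f)
  case 0
  then show ?case by simp
next
  case (Suc N)
  have split: "{..<2 ^ Suc N} = {..<(2::nat) ^ N} \<union> (\<lambda>j. j + 2 ^ N) ` {..<2 ^ N}"
  proof -
    have h: "x \<in> (\<lambda>j. j + 2 ^ N) ` {..<2 ^ N}" if "2 ^ N \<le> x" "x < 2 ^ Suc N" for x :: nat
      using that by (intro image_eqI[of _ _ "x - 2 ^ N"]) auto
    show ?thesis
    proof (rule Set.set_eqI)
      fix x :: nat
      show "x \<in> {..<2 ^ Suc N} \<longleftrightarrow> x \<in> {..<2 ^ N} \<union> (\<lambda>j. j + 2 ^ N) ` {..<2 ^ N}"
        using h[of x] by (cases "x < 2 ^ N") auto
    qed
  qed
  have disj: "{..<(2::nat) ^ N} \<inter> (\<lambda>j. j + 2 ^ N) ` {..<2 ^ N} = {}" by auto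
  have A: "(\<Prod>k<Suc N. f k (qbit j k)) = (\<Prod>k<N. f k (qbit j k)) * f N 0" if "j < 2 ^ N" for j
  proof -
    have "qbit j N = 0" using qbit_high[of j N 0 N] that by simp
    then show ?thesis by simp
  qed
  have B: "(\<Prod>k<Suc N. f k (qbit (j + 2 ^ N) k)) = (\<Prod>k<N. f k (qbit j k)) * f N 1" if "j < 2 ^ N" for j
  proof -
    have 1: "qbit (j + 2 ^ N) k = (if k < N then qbit j k else 1)" if "k \<le> N" for k
      using qbit_high[of j N 1 k] \<open>j < 2 ^ N\<close> that by simp
    have "(\<Prod>k<N. f k (qbit (j + 2 ^ N) k)) = (\<Prod>k<N. f k (qbit j k))"
      by (rule prod.cong) (auto simp: 1)
    then show ?thesis using 1[of N] by simp
  qed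
  have "(\<Sum>j<2 ^ Suc N. \<Prod>k<Suc N. f k (qbit j k))
      = (\<Sum>j<2 ^ N. \<Prod>k<Suc N. f k (qbit j k)) + (\<Sum>j<2 ^ N. \<Prod>k<Suc N. f k (qbit (j + 2 ^ N) k))"
    unfolding split by (subst sum.union_disjoint) (auto simp: sum.reindex inj_on_def)
  also have "\<dots> = (\<Sum>j<2 ^ N. \<Prod>k<N. f k (qbit j k)) * f N 0 + (\<Sum>j<2 ^ N. \<Prod>k<N. f k (qbit j k)) * f N 1"
    by (simp add: A B sum_distrib_right del: prod.lessThan_Suc)
  also have "\<dots> = (\<Prod>k<Suc N. f k 0 + f k 1)" using Suc[of f] by (simp add: distrib_left)
  finally show ?case .
qed

lemma bits_eq:
  assumes "i < 2 ^ N" "j < 2 ^ N" "\<forall>k<N. qbit i k = qbit j k"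
  shows "i = j"
  using assms
proof (induction N arbitrary: i j)
  case 0
  then show ?case by simp
next
  case (Suc N)
  have q: "qbit x (Suc k) = qbit (x div 2) k" for x k
    by (simp add: qbit_def div_mult2_eq)
  have "i div 2 = j div 2"
    using Suc.prems by (intro Suc.IH) (auto simp: q)
  moreover have "i mod 2 = j mod 2" using Suc.prems(3) by (auto simp: qbit_def)
  ultimately show ?case by (metis div_mult_mod_eq)
qed

lemma qbit_tensor:
  assumes "c < 2 ^ m"
  shows "qbit (a * 2 ^ m + c) k = (if k < m then qbit c k else qbit a (k - m))"
proof (cases "k < m")
  case True
  then obtain d where d: "m = k + Suc d" using less_imp_Suc_add[OF True] by auto
  have e: "a * 2 ^ m + c = c + 2 ^ k * (2 * (2 ^ d * a))"
    by (simp add: d power_add mult.assoc mult.commute mult.left_commute)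
  have "(a * 2 ^ m + c) div 2 ^ k = c div 2 ^ k + 2 * (2 ^ d * a)"
    unfolding e by (rule div_add_pow)
  then show ?thesis using True by (simp add: qbit_def)
next
  case False
  then obtain d where d: "k = m + d" using le_Suc_ex[of m k] by auto
  have "(a * 2 ^ m + c) div 2 ^ k = (a * 2 ^ m + c) div 2 ^ m div 2 ^ d"
    by (simp add: d power_add div_mult2_eq)
  also have "(a * 2 ^ m + c) div 2 ^ m = a" using assms by simp
  finally show ?thesis using False d by (simp add: qbit_def)
qed

fun pm :: "pauli1 \<Rightarrow> pauli1 \<Rightarrow> pauli1" where
  "pm PI q = q"
| "pm p PI = p"
| "pm PX PX = PI" | "pm PY PY = PI" | "pm PZ PZ = PI"
| "pm PX PY = PZ" | "pm PY PX = PZ"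
| "pm PY PZ = PX" | "pm PZ PY = PX"
| "pm PZ PX = PY" | "pm PX PZ = PY"

fun ph :: "pauli1 \<Rightarrow> pauli1 \<Rightarrow> complex" where
  "ph PX PY = \<i>" | "ph PY PX = - \<i>"
| "ph PY PZ = \<i>" | "ph PZ PY = - \<i>"
| "ph PZ PX = \<i>" | "ph PX PZ = - \<i>"
| "ph _ _ = 1"

lemma pm_PI_right[simp]: "pm p PI = p" by (cases p) auto
lemma pm_self[simp]: "pm p p = PI" by (cases p) auto
lemma pm_comm: "pm p q = pm q p" by (cases p; cases q) auto
lemma pm_assoc: "pm (pm p q) r = pm p (pm q r)" by (cases p; cases q; cases r) auto
lemma ph_self[simp]: "ph p p = 1" by (cases p) auto
lemma ph_PI[simp]: "ph PI q = 1" "ph p PI = 1" by (cases q; simp) (cases p; simp)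
lemma ph_norm[simp]: "cmod (ph p q) = 1" by (cases p; cases q) auto

lemma bit01: "(r::nat) < 2 \<Longrightarrow> r = 0 \<or> r = 1" by auto

lemma entry_mult:
  assumes "r < 2" "s < 2"
  shows "pauli1_entry p r 0 * pauli1_entry q 0 s + pauli1_entry p r 1 * pauli1_entry q 1 s
       = ph p q * pauli1_entry (pm p q) r s"
  using bit01[OF assms(1)] bit01[OF assms(2)]
  by (cases p; cases q) auto

lemma entry_trace: "pauli1_entry p 0 0 + pauli1_entry p 1 1 = (if p = PI then 2 else 0)"
  by (cases p) auto

lemmas entry_mult' = entry_mult[simplified]
lemmas entry_trace' = entry_trace[simplified]

lemma entry_hs:
  "(cnj (pauli1_entry p 0 0) * pauli1_entry q 0 0 + cnj (pauli1_entry p 0 1) * pauli1_entry q 0 1)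
   + (cnj (pauli1_entry p 1 0) * pauli1_entry q 1 0 + cnj (pauli1_entry p 1 1) * pauli1_entry q 1 1)
   = (if p = q then 2 else 0)"
  by (cases p; cases q) auto

lemma pauli_op_mult:
  "mmult N (pauli_op N c ps) (pauli_op N d qs)
    = pauli_op N (c * d * (\<Prod>k<N. ph (ps k) (qs k))) (\<lambda>k. pm (ps k) (qs k))"
proof (rule ext, rule ext)
  fix i j
  show "mmult N (pauli_op N c ps) (pauli_op N d qs) i j
    = pauli_op N (c * d * (\<Prod>k<N. ph (ps k) (qs k))) (\<lambda>k. pm (ps k) (qs k)) i j"
  proof (cases "i < 2 ^ N \<and> j < 2 ^ N")
    case True
    have "mmult N (pauli_op N c ps) (pauli_op N d qs) i j
      = (\<Sum>l<2 ^ N. c * d * (\<Prod>k<N. pauli1_entry (ps k) (qbit i k) (qbit l k) * pauli1_entry (qs k) (qbit l k) (qbit j k)))"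
      unfolding mmult_def pauli_op_def using True
      by (intro sum.cong refl) (auto simp: prod.distrib)
    also have "\<dots> = c * d * (\<Prod>k<N. pauli1_entry (ps k) (qbit i k) 0 * pauli1_entry (qs k) 0 (qbit j k)
         + pauli1_entry (ps k) (qbit i k) 1 * pauli1_entry (qs k) 1 (qbit j k))"
      by (subst sum_distrib_left[symmetric]) (subst sum_bits, simp)
    also have "\<dots> = c * d * (\<Prod>k<N. ph (ps k) (qs k) * pauli1_entry (pm (ps k) (qs k)) (qbit i k) (qbit j k))"
      by (simp add: entry_mult' qbit_lt2)
    also have "\<dots> = pauli_op N (c * d * (\<Prod>k<N. ph (ps k) (qs k))) (\<lambda>k. pm (ps k) (qs k)) i j"
      unfolding pauli_op_def using True by (simp add: prod.distrib)
    finally show ?thesis .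
  next
    case False
    then show ?thesis unfolding mmult_def pauli_op_def by auto
  qed
qed

lemma ident_pauli: "ident N = pauli_op N 1 (\<lambda>_. PI)"
proof (rule ext, rule ext)
  fix i j
  show "ident N i j = pauli_op N 1 (\<lambda>_. PI) i j"
  proof (cases "i < 2 ^ N \<and> j < 2 ^ N")
    case True
    have "(\<Prod>k<N. pauli1_entry PI (qbit i k) (qbit j k)) = (if i = j then 1 else 0)"
    proof (cases "i = j")
      case False
      then obtain k where "k < N" "qbit i k \<noteq> qbit j k" using bits_eq[of i N j] True by auto
      then have "(\<Prod>k<N. pauli1_entry PI (qbit i k) (qbit j k)) = 0"
        by (intro prod_zero) auto
      then show ?thesis using False by simp
    qed simp
    then show ?thesis using True unfolding ident_def pauli_op_def by auto
  next
    case False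
    then show ?thesis unfolding ident_def pauli_op_def by auto
  qed
qed

lemma pauli_op_cong: "(\<And>k. k < N \<Longrightarrow> ps k = qs k) \<Longrightarrow> pauli_op N c ps = pauli_op N c qs"
  unfolding pauli_op_def by (intro ext) (auto intro!: prod.cong)

lemma pauli_op_trace:
  "(\<Sum>i<2 ^ N. pauli_op N c ps i i) = c * (\<Prod>k<N. if ps k = PI then 2 else 0)"
proof -
  have "(\<Sum>i<2 ^ N. pauli_op N c ps i i) = c * (\<Sum>i<2 ^ N. \<Prod>k<N. pauli1_entry (ps k) (qbit i k) (qbit i k))"
    unfolding pauli_op_def by (simp add: sum_distrib_left)
  also have "(\<Sum>i<2 ^ N. \<Prod>k<N. pauli1_entry (ps k) (qbit i k) (qbit i k)) = (\<Prod>k<N. if ps k = PI then 2 else 0)"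
    by (subst sum_bits[where f = "\<lambda>k t. pauli1_entry (ps k) t t"]) (simp add: entry_trace')
  finally show ?thesis .
qed

lemma pauli_op_hs:
  "(\<Sum>i<2 ^ N. \<Sum>j<2 ^ N. cnj (pauli_op N c ps i j) * pauli_op N d qs i j)
     = cnj c * d * (\<Prod>k<N. if ps k = qs k then 2 else 0)"
proof -
  have "(\<Sum>i<2 ^ N. \<Sum>j<2 ^ N. cnj (pauli_op N c ps i j) * pauli_op N d qs i j)
     = cnj c * d * (\<Sum>i<2 ^ N. \<Sum>j<2 ^ N. \<Prod>k<N. cnj (pauli1_entry (ps k) (qbit i k) (qbit j k)) * pauli1_entry (qs k) (qbit i k) (qbit j k))"
    unfolding pauli_op_def by (simp add: sum_distrib_left prod.distrib mult_ac)
  also have "\<dots> = cnj c * d * (\<Sum>i<2 ^ N. \<Prod>k<N. cnj (pauli1_entry (ps k) (qbit i k) 0) * pauli1_entry (qs k) (qbit i k) 0 + cnj (pauli1_entry (ps k) (qbit i k) 1) * pauli1_entry (qs k) (qbit i k) 1)"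
    by (subst sum_bits, rule refl)
  also have "\<dots> = cnj c * d * (\<Prod>k<N. (cnj (pauli1_entry (ps k) 0 0) * pauli1_entry (qs k) 0 0 + cnj (pauli1_entry (ps k) 0 1) * pauli1_entry (qs k) 0 1)
   + (cnj (pauli1_entry (ps k) 1 0) * pauli1_entry (qs k) 1 0 + cnj (pauli1_entry (ps k) 1 1) * pauli1_entry (qs k) 1 1))"
    by (subst sum_bits[where f = "\<lambda>k t. cnj (pauli1_entry (ps k) t 0) * pauli1_entry (qs k) t 0 + cnj (pauli1_entry (ps k) t 1) * pauli1_entry (qs k) t 1"]) simp
  also have "\<dots> = cnj c * d * (\<Prod>k<N. if ps k = qs k then 2 else 0)"
    by (simp only: entry_hs)
  finally show ?thesis .
qed

lemma lessThan_add_split: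
  "{..<n + m} = {..<m} \<union> (\<lambda>k. m + k) ` {..<(n::nat)}"
proof (rule Set.set_eqI)
  fix x :: nat
  show "x \<in> {..<n + m} \<longleftrightarrow> x \<in> {..<m} \<union> (\<lambda>k. m + k) ` {..<n}"
  proof (cases "x < m")
    case False
    then show ?thesis by (auto intro!: image_eqI[of _ _ "x - m"])
  qed auto
qed

lemma prod_add_split:
  fixes f :: "nat \<Rightarrow> 'a :: comm_monoid_mult"
  shows "(\<Prod>k<n + m. f k) = (\<Prod>k<m. f k) * (\<Prod>k<n. f (m + k))"
  unfolding lessThan_add_split
  by (subst prod.union_disjoint) (auto simp: prod.reindex inj_on_def)

lemma tensor_idx_lt:
  fixes a c :: nat
  assumes "a < 2 ^ n" "c < 2 ^ m"
  shows "a * 2 ^ m + c < 2 ^ (n + m)"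
proof -
  have "a * 2 ^ m + c < (a + 1) * 2 ^ m" using assms by simp
  also have "\<dots> \<le> 2 ^ n * 2 ^ m" using assms by (intro mult_right_mono) auto
  finally show ?thesis by (simp add: power_add)
qed

lemma pauli_op_tensor:
  assumes "a < 2 ^ n" "a' < 2 ^ n" "c1 < 2 ^ m" "c2 < 2 ^ m"
  shows "pauli_op (n + m) c ps (a * 2 ^ m + c1) (a' * 2 ^ m + c2)
       = c * pauli_op m 1 ps c1 c2 * pauli_op n 1 (\<lambda>k. ps (m + k)) a a'"
proof -
  have l: "a * 2 ^ m + c1 < 2 ^ (n + m)" "a' * 2 ^ m + c2 < 2 ^ (n + m)"
    using assms tensor_idx_lt by auto
  have "(\<Prod>k<n + m. pauli1_entry (ps k) (qbit (a * 2 ^ m + c1) k) (qbit (a' * 2 ^ m + c2) k))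
     = (\<Prod>k<m. pauli1_entry (ps k) (qbit (a * 2 ^ m + c1) k) (qbit (a' * 2 ^ m + c2) k))
       * (\<Prod>k<n. pauli1_entry (ps (m + k)) (qbit (a * 2 ^ m + c1) (m + k)) (qbit (a' * 2 ^ m + c2) (m + k)))"
    by (rule prod_add_split)
  also have "\<dots> = (\<Prod>k<m. pauli1_entry (ps k) (qbit c1 k) (qbit c2 k))
       * (\<Prod>k<n. pauli1_entry (ps (m + k)) (qbit a k) (qbit a' k))"
    using assms by (simp add: qbit_tensor)
  finally show ?thesis using l assms unfolding pauli_op_def by simp
qed

lemma sum_tensor:
  fixes f :: "nat \<Rightarrow> 'a :: comm_monoid_add"
  shows "(\<Sum>a<A. \<Sum>c<C. f (a * C + c)) = (\<Sum>i<A * C. f i)"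
proof (induction A)
  case 0
  then show ?case by simp
next
  case (Suc A)
  have "(\<Sum>i<Suc A * C. f i) = (\<Sum>i<A * C. f i) + (\<Sum>i\<in>{A * C..<A * C + C}. f i)"
    by (simp add: add.commute sum.lessThan_Suc lessThan_atLeast0 sum.atLeastLessThan_concat)
  also have "(\<Sum>i\<in>{A * C..<A * C + C}. f i) = (\<Sum>c<C. f (A * C + c))"
  proof -
    have "{A * C..<A * C + C} = (\<lambda>c. A * C + c) ` {..<C}"
    proof (rule Set.set_eqI)
      fix x show "x \<in> {A * C..<A * C + C} \<longleftrightarrow> x \<in> (\<lambda>c. A * C + c) ` {..<C}"
        by (auto intro!: image_eqI[of _ _ "x - A * C"])
    qed
    then show ?thesis by (simp add: sum.reindex inj_on_def)
  qed
  finally show ?case using Suc by simp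
qed

lemma mvmult_mmult:
  "mvmult N (mmult N A B) v = mvmult N A (mvmult N B v)"
proof (rule ext)
  fix i
  have "mvmult N (mmult N A B) v i = (\<Sum>j<2 ^ N. \<Sum>k<2 ^ N. A i k * B k j * v j)"
    unfolding mvmult_def mmult_def by (simp add: sum_distrib_right)
  also have "\<dots> = (\<Sum>k<2 ^ N. \<Sum>j<2 ^ N. A i k * B k j * v j)" by (rule sum.swap)
  also have "\<dots> = mvmult N A (mvmult N B v) i"
    unfolding mvmult_def by (simp add: sum_distrib_left mult.assoc)
  finally show "mvmult N (mmult N A B) v i = mvmult N A (mvmult N B v) i" .
qed

lemma mvmult_ident: "is_vec N v \<Longrightarrow> mvmult N (ident N) v = v"
proof (rule ext)
  fix i assume v: "is_vec N v"
  show "mvmult N (ident N) v i = v i"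
  proof (cases "i < 2 ^ N")
    case True
    have "mvmult N (ident N) v i = (\<Sum>j<2 ^ N. if j = i then v j else 0)"
      unfolding mvmult_def ident_def using True by (intro sum.cong) auto
    also have "\<dots> = v i" using True by simp
    finally show ?thesis .
  next
    case False
    then show ?thesis using v unfolding mvmult_def ident_def is_vec_def by auto
  qed
qed

definition sdiff :: "nat set \<Rightarrow> nat set \<Rightarrow> nat set" where
  "sdiff T T' = (T - T') \<union> (T' - T)"

locale stab =
  fixes n m :: nat and Phi :: "nat \<Rightarrow> nat \<Rightarrow> complex" and P :: "nat \<Rightarrow> nat \<Rightarrow> nat \<Rightarrow> complex"
  assumes paulis: "\<forall>l<n + m. is_pauli (n + m) (P l)"
    and indep: "independent_paulis (n + m) (n + m) P"
    and vec: "\<forall>b<2 ^ (n + m). is_vec (n + m) (Phi b)"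
    and orth: "\<forall>b<2 ^ (n + m). \<forall>b'<2 ^ (n + m). cinner (n + m) (Phi b) (Phi b') = (if b = b' then 1 else 0)"
    and eig: "\<forall>b<2 ^ (n + m). \<forall>l<n + m. \<exists>lam. mvmult (n + m) (P l) (Phi b) = (\<lambda>i. lam * Phi b i)"
begin

abbreviation "N \<equiv> n + m"

lemma orth': "b < 2 ^ N \<Longrightarrow> b' < 2 ^ N \<Longrightarrow> (\<Sum>i<2 ^ N. cnj (Phi b i) * Phi b' i) = (if b = b' then 1 else 0)"
  using orth unfolding cinner_def by auto

lemma complete:
  assumes "i < 2 ^ N" "j < 2 ^ N"
  shows "(\<Sum>b<2 ^ N. Phi b i * cnj (Phi b j)) = (if i = j then 1 else 0)"
proof -
  define U where "U = mat (2 ^ N) (2 ^ N) (\<lambda>(i, b). Phi b i)"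
  define V where "V = mat (2 ^ N) (2 ^ N) (\<lambda>(b, i). cnj (Phi b i))"
  have U: "U \<in> carrier_mat (2 ^ N) (2 ^ N)" and V: "V \<in> carrier_mat (2 ^ N) (2 ^ N)"
    unfolding U_def V_def by auto
  have "V * U = 1\<^sub>m (2 ^ N)"
  proof (rule eq_matI)
    fix b b' assume "b < dim_row (1\<^sub>m (2 ^ N))" "b' < dim_col (1\<^sub>m (2 ^ N))"
    then have bb: "b < 2 ^ N" "b' < 2 ^ N" by auto
    have "(V * U) $$ (b, b') = (\<Sum>i = 0..<2 ^ N. cnj (Phi b i) * Phi b' i)"
      using bb U V by (simp add: V_def U_def scalar_prod_def)
    also have "\<dots> = (if b = b' then 1 else 0)" using orth'[OF bb] by (simp add: atLeast0LessThan)
    finally show "(V * U) $$ (b, b') = 1\<^sub>m (2 ^ N) $$ (b, b')" using bb by simp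
  qed (use U V in auto)
  then have UV: "U * V = 1\<^sub>m (2 ^ N)" by (rule mat_mult_left_right_inverse[OF V U])
  have "(U * V) $$ (i, j) = (\<Sum>b = 0..<2 ^ N. Phi b i * cnj (Phi b j))"
    using assms U V by (simp add: V_def U_def scalar_prod_def)
  then show ?thesis using UV assms by (simp add: atLeast0LessThan)
qed

lemma phi_nonzero: "b < 2 ^ N \<Longrightarrow> \<exists>i<2 ^ N. Phi b i \<noteq> 0"
proof (rule ccontr)
  assume b: "b < 2 ^ N" and "\<not> (\<exists>i<2 ^ N. Phi b i \<noteq> 0)"
  then have "(\<Sum>i<2 ^ N. cnj (Phi b i) * Phi b i) = 0" by auto
  then show False using orth'[OF b b] by simp
qed

lemma scal_eq:
  assumes "b < 2 ^ N" "(\<lambda>i. x * Phi b i) = (\<lambda>i. y * Phi b i)"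
  shows "x = y"
proof -
  obtain i where "Phi b i \<noteq> 0" using phi_nonzero[OF assms(1)] by auto
  moreover have "x * Phi b i = y * Phi b i" using fun_cong[OF assms(2), of i] by simp
  ultimately show ?thesis by simp
qed

definition lam :: "nat \<Rightarrow> nat \<Rightarrow> complex" where
  "lam b l = (SOME x. mvmult N (P l) (Phi b) = (\<lambda>i. x * Phi b i))"

lemma lam_eig: "b < 2 ^ N \<Longrightarrow> l < N \<Longrightarrow> mvmult N (P l) (Phi b) = (\<lambda>i. lam b l * Phi b i)"
proof -
  assume "b < 2 ^ N" "l < N"
  then have "\<exists>x. mvmult N (P l) (Phi b) = (\<lambda>i. x * Phi b i)" using eig by blast
  then show ?thesis unfolding lam_def by (rule someI_ex)
qed

definition cP :: "nat \<Rightarrow> complex" where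
  "cP l = (SOME c. \<exists>ps. c \<in> {1, -1, \<i>, -\<i>} \<and> P l = pauli_op N c ps)"
definition psP :: "nat \<Rightarrow> nat \<Rightarrow> pauli1" where
  "psP l = (SOME ps. P l = pauli_op N (cP l) ps)"

lemma P_rep: "l < N \<Longrightarrow> P l = pauli_op N (cP l) (psP l) \<and> cP l \<in> {1, -1, \<i>, -\<i>}"
proof -
  assume l: "l < N"
  have "\<exists>c ps. c \<in> {1, -1, \<i>, -\<i>} \<and> P l = pauli_op N c ps" using paulis l unfolding is_pauli_def by auto
  then have 1: "\<exists>ps. cP l \<in> {1, -1, \<i>, -\<i>} \<and> P l = pauli_op N (cP l) ps"
    unfolding cP_def by (rule someI_ex)
  then have "P l = pauli_op N (cP l) (psP l)" unfolding psP_def by (metis (mono_tags, lifting) someI_ex)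
  then show ?thesis using 1 by auto
qed

lemma cP_norm: "l < N \<Longrightarrow> cmod (cP l) = 1"
  using P_rep[of l] by auto

lemma P_sq: "l < N \<Longrightarrow> mmult N (P l) (P l) = (\<lambda>i j. (cP l)\<^sup>2 * ident N i j)"
proof -
  assume l: "l < N"
  have "mmult N (P l) (P l) = pauli_op N ((cP l)\<^sup>2) (\<lambda>_. PI)"
    using P_rep[OF l] by (simp add: pauli_op_mult power2_eq_square)
  also have "\<dots> = (\<lambda>i j. (cP l)\<^sup>2 * ident N i j)"
    unfolding ident_pauli pauli_op_def by (intro ext) auto
  finally show ?thesis .
qed

lemma lam_sq: "b < 2 ^ N \<Longrightarrow> l < N \<Longrightarrow> (lam b l)\<^sup>2 = (cP l)\<^sup>2"
proof -
  assume b: "b < 2 ^ N" and l: "l < N"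
  have "mvmult N (mmult N (P l) (P l)) (Phi b) = mvmult N (P l) (mvmult N (P l) (Phi b))"
    by (rule mvmult_mmult)
  also have "\<dots> = mvmult N (P l) (\<lambda>i. lam b l * Phi b i)" by (simp only: lam_eig[OF b l])
  also have "\<dots> = (\<lambda>i. lam b l * mvmult N (P l) (Phi b) i)"
    by (simp add: mvmult_def sum_distrib_left mult_ac)
  also have "\<dots> = (\<lambda>i. (lam b l)\<^sup>2 * Phi b i)"
    by (simp add: lam_eig[OF b l] power2_eq_square mult.assoc)
  finally have e1: "mvmult N (mmult N (P l) (P l)) (Phi b) = (\<lambda>i. (lam b l)\<^sup>2 * Phi b i)" .
  have e2: "mvmult N (mmult N (P l) (P l)) (Phi b) = (\<lambda>i. (cP l)\<^sup>2 * Phi b i)"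
  proof -
    have "mmult N (P l) (P l) = (\<lambda>i j. (cP l)\<^sup>2 * ident N i j)" by (rule P_sq[OF l])
    then have "mvmult N (mmult N (P l) (P l)) (Phi b) = (\<lambda>i. (cP l)\<^sup>2 * mvmult N (ident N) (Phi b) i)"
      by (simp add: mvmult_def sum_distrib_left mult.assoc)
    then show ?thesis using mvmult_ident vec b by simp
  qed
  show ?thesis by (rule scal_eq[OF b], rule trans[OF e1[symmetric] e2])
qed

lemma lam_norm: "b < 2 ^ N \<Longrightarrow> l < N \<Longrightarrow> cmod (lam b l) = 1"
proof -
  assume b: "b < 2 ^ N" and l: "l < N"
  have "cmod (lam b l) ^ 2 = 1" using lam_sq[OF b l] cP_norm[OF l] by (metis norm_power power_one)
  then show ?thesis using norm_ge_zero[of "lam b l"] by (simp add: power2_eq_1_iff)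
qed

end

lemma mvmult_scale: "mvmult N A (\<lambda>i. c * v i) = (\<lambda>i. c * mvmult N A v i)"
  unfolding mvmult_def by (simp add: sum_distrib_left mult_ac)

lemma sum_pow_prod:
  fixes f :: "nat \<Rightarrow> 'a :: comm_semiring_1"
  assumes "finite A"
  shows "(\<Sum>T\<in>Pow A. \<Prod>l\<in>T. f l) = (\<Prod>l\<in>A. 1 + f l)"
  using prod_add[OF assms, of f "\<lambda>_. 1"] by (simp add: add.commute)

context stab
begin

definition gT :: "nat set \<Rightarrow> nat \<Rightarrow> nat \<Rightarrow> complex" where
  "gT T = mprod_list N (map P (sorted_list_of_set T))"

definition lamT :: "nat \<Rightarrow> nat set \<Rightarrow> complex" where
  "lamT b T = (\<Prod>l\<in>T. lam b l)"

lemma list_eig: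
  assumes "set xs \<subseteq> {..<N}" "b < 2 ^ N"
  shows "mvmult N (mprod_list N (map P xs)) (Phi b) = (\<lambda>i. prod_list (map (lam b) xs) * Phi b i)"
  using assms(1)
proof (induction xs)
  case Nil
  then show ?case using mvmult_ident vec assms(2) by simp
next
  case (Cons x xs)
  have x: "x < N" using Cons.prems by auto
  have "mvmult N (mprod_list N (map P (x # xs))) (Phi b) = mvmult N (P x) (mvmult N (mprod_list N (map P xs)) (Phi b))"
    by (simp add: mvmult_mmult)
  also have "\<dots> = mvmult N (P x) (\<lambda>i. prod_list (map (lam b) xs) * Phi b i)"
    using Cons by simp
  also have "\<dots> = (\<lambda>i. prod_list (map (lam b) xs) * (lam b x * Phi b i))"
    by (simp add: mvmult_scale lam_eig[OF assms(2) x])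
  finally show ?case by (simp add: mult_ac)
qed

lemma gT_eig:
  assumes "T \<subseteq> {..<N}" "b < 2 ^ N"
  shows "mvmult N (gT T) (Phi b) = (\<lambda>i. lamT b T * Phi b i)"
proof -
  have fin: "finite T" using assms(1) finite_subset by blast
  have "lamT b T = prod_list (map (lam b) (sorted_list_of_set T))"
    unfolding lamT_def using prod.distinct_set_conv_list[of "sorted_list_of_set T" "lam b"] fin by simp
  then show ?thesis unfolding gT_def using list_eig[of "sorted_list_of_set T" b] assms fin by simp
qed

lemma list_rep:
  assumes "set xs \<subseteq> {..<N}"
  shows "\<exists>c ps. mprod_list N (map P xs) = pauli_op N c ps \<and> cmod c = 1"
  using assms
proof (induction xs)
  case Nil
  then show ?case using ident_pauli by auto
next
  case (Cons x xs)
  then obtain c ps where cps: "mprod_list N (map P xs) = pauli_op N c ps" "cmod c = 1" by auto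
  have x: "x < N" using Cons.prems by auto
  have "mprod_list N (map P (x # xs)) = mmult N (pauli_op N (cP x) (psP x)) (pauli_op N c ps)"
    using P_rep[OF x] cps by simp
  also have "\<dots> = pauli_op N (cP x * c * (\<Prod>k<N. ph (psP x k) (ps k))) (\<lambda>k. pm (psP x k) (ps k))"
    by (rule pauli_op_mult)
  finally show ?case using cps cP_norm[OF x]
    by (intro exI[of _ "cP x * c * (\<Prod>k<N. ph (psP x k) (ps k))"] exI conjI)
       (auto simp: norm_mult prod_norm[symmetric])
qed

definition gc :: "nat set \<Rightarrow> complex" where
  "gc T = (SOME c. \<exists>ps. gT T = pauli_op N c ps \<and> cmod c = 1)"
definition gs :: "nat set \<Rightarrow> nat \<Rightarrow> pauli1" where
  "gs T = (SOME ps. gT T = pauli_op N (gc T) ps)"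

lemma gT_rep:
  assumes "T \<subseteq> {..<N}"
  shows "gT T = pauli_op N (gc T) (gs T)" "cmod (gc T) = 1"
proof -
  have fin: "finite T" using assms(1) finite_subset by blast
  have "\<exists>c ps. gT T = pauli_op N c ps \<and> cmod c = 1"
    unfolding gT_def using list_rep[of "sorted_list_of_set T"] assms fin by simp
  then have 1: "\<exists>ps. gT T = pauli_op N (gc T) ps \<and> cmod (gc T) = 1"
    unfolding gc_def by (rule someI_ex)
  then have "\<exists>ps. gT T = pauli_op N (gc T) ps" by blast
  then show "gT T = pauli_op N (gc T) (gs T)" unfolding gs_def by (rule someI_ex)
  show "cmod (gc T) = 1" using 1 by blast
qed

lemma gT_zero_out:
  assumes "T \<subseteq> {..<N}" "\<not> (i < 2 ^ N \<and> j < 2 ^ N)"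
  shows "gT T i j = 0"
  using gT_rep(1)[OF assms(1)] assms(2) unfolding pauli_op_def by auto

lemma spectral:
  assumes "\<forall>b<2 ^ N. mvmult N A (Phi b) = (\<lambda>i. \<alpha> b * Phi b i)" "i < 2 ^ N" "j < 2 ^ N"
  shows "A i j = (\<Sum>b<2 ^ N. \<alpha> b * Phi b i * cnj (Phi b j))"
proof -
  have "(\<Sum>b<2 ^ N. \<alpha> b * Phi b i * cnj (Phi b j)) = (\<Sum>b<2 ^ N. mvmult N A (Phi b) i * cnj (Phi b j))"
    using assms(1) by (intro sum.cong refl) simp
  also have "\<dots> = (\<Sum>b<2 ^ N. \<Sum>l<2 ^ N. A i l * (Phi b l * cnj (Phi b j)))"
    unfolding mvmult_def by (simp add: sum_distrib_right mult.assoc)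
  also have "\<dots> = (\<Sum>l<2 ^ N. \<Sum>b<2 ^ N. A i l * (Phi b l * cnj (Phi b j)))"
    by (rule sum.swap)
  also have "\<dots> = (\<Sum>l<2 ^ N. A i l * (if l = j then 1 else 0))"
    by (intro sum.cong refl) (simp add: sum_distrib_left[symmetric] complete assms(3))
  also have "\<dots> = A i j" using assms(3) by (simp add: if_distrib cong: if_cong)
  finally show ?thesis by simp
qed

lemma gT_spec:
  assumes "T \<subseteq> {..<N}" "i < 2 ^ N" "j < 2 ^ N"
  shows "gT T i j = (\<Sum>b<2 ^ N. lamT b T * Phi b i * cnj (Phi b j))"
  using spectral[of "gT T" "\<lambda>b. lamT b T"] gT_eig[OF assms(1)] assms(2,3) by blast

lemma norm_phi: "b < 2 ^ N \<Longrightarrow> (\<Sum>i<2 ^ N. Phi b i * cnj (Phi b i)) = 1"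
  using orth'[of b b] by (simp add: mult.commute)

lemma gT_trace:
  assumes "T \<subseteq> {..<N}"
  shows "(\<Sum>i<2 ^ N. gT T i i) = (\<Sum>b<2 ^ N. lamT b T)"
proof -
  have "(\<Sum>i<2 ^ N. gT T i i) = (\<Sum>i<2 ^ N. \<Sum>b<2 ^ N. lamT b T * (Phi b i * cnj (Phi b i)))"
    using gT_spec[OF assms] by (intro sum.cong refl) (simp add: mult.assoc)
  also have "\<dots> = (\<Sum>b<2 ^ N. \<Sum>i<2 ^ N. lamT b T * (Phi b i * cnj (Phi b i)))"
    by (rule sum.swap)
  also have "\<dots> = (\<Sum>b<2 ^ N. lamT b T)"
    by (intro sum.cong refl) (simp add: sum_distrib_left[symmetric] norm_phi)
  finally show ?thesis .
qed

lemma gT_empty: "gT {} = ident N"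
  unfolding gT_def by simp

lemma trace_gT_zero:
  assumes "T \<subseteq> {..<N}" "T \<noteq> {}"
  shows "(\<Sum>i<2 ^ N. gT T i i) = 0"
proof (cases "\<forall>k<N. gs T k = PI")
  case True
  then have "gT T = pauli_op N (gc T) (\<lambda>_. PI)"
    using gT_rep(1)[OF assms(1)] pauli_op_cong[of N "gs T" "\<lambda>_. PI" "gc T"] by simp
  also have "\<dots> = (\<lambda>i j. gc T * ident N i j)"
    unfolding ident_pauli pauli_op_def by (intro ext) auto
  finally have "mprod_list N (map P (sorted_list_of_set T)) = (\<lambda>i j. gc T * ident N i j)"
    unfolding gT_def .
  then show ?thesis using indep assms unfolding independent_paulis_def by blast
next
  case False
  then obtain k where k: "k < N" "gs T k \<noteq> PI" by auto
  have "(\<Prod>k<N. if gs T k = PI then 2 else 0) = (0::complex)"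
    using k by (intro prod_zero) auto
  then show ?thesis using gT_rep(1)[OF assms(1)] pauli_op_trace[of N "gc T" "gs T"] by simp
qed

lemma trace_ident: "(\<Sum>i<2 ^ N. ident N i i) = 2 ^ N"
  unfolding ident_def by simp

lemma lam_pair:
  assumes "b < 2 ^ N" "b' < 2 ^ N" "l < N"
  shows "1 + cnj (lam b' l) * lam b l = (if lam b l = lam b' l then 2 else 0)"
proof -
  let ?x = "lam b l" and ?y = "lam b' l"
  have sq: "?x\<^sup>2 = ?y\<^sup>2" using lam_sq assms by simp
  have ny: "cnj ?y * ?y = 1"
    using lam_norm[OF assms(2,3)] complex_norm_square[of ?y] by (simp add: mult.commute)
  show ?thesis
  proof (cases "?x = ?y")
    case True
    then show ?thesis using ny by simp
  next
    case False
    have "(?x - ?y) * (?x + ?y) = 0" using sq by (simp add: algebra_simps power2_eq_square)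
    then have "?x = - ?y" using False by (simp add: add_eq_0_iff)
    then show ?thesis using ny False by simp
  qed
qed

lemma orth_prod:
  assumes "b < 2 ^ N" "b' < 2 ^ N"
  shows "(\<Sum>T\<in>Pow {..<N}. cnj (lamT b' T) * lamT b T) = (if \<forall>l<N. lam b l = lam b' l then 2 ^ N else 0)"
proof -
  have "(\<Sum>T\<in>Pow {..<N}. cnj (lamT b' T) * lamT b T) = (\<Sum>T\<in>Pow {..<N}. \<Prod>l\<in>T. cnj (lam b' l) * lam b l)"
    unfolding lamT_def by (simp add: cnj_prod prod.distrib)
  also have "\<dots> = (\<Prod>l<N. 1 + cnj (lam b' l) * lam b l)" by (rule sum_pow_prod) simp
  also have "\<dots> = (\<Prod>l<N. if lam b l = lam b' l then 2 else 0)"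
    using lam_pair[OF assms] by (intro prod.cong) auto
  also have "\<dots> = (if \<forall>l<N. lam b l = lam b' l then 2 ^ N else 0)"
  proof (cases "\<forall>l<N. lam b l = lam b' l")
    case False
    then obtain l where "l < N" "lam b l \<noteq> lam b' l" by auto
    then show ?thesis using False by (intro trans[OF prod_zero]) auto
  qed simp
  finally show ?thesis .
qed

lemma distinct_pattern:
  assumes "b < 2 ^ N" "b' < 2 ^ N" "\<forall>l<N. lam b l = lam b' l"
  shows "b = b'"
proof -
  define S where "S = (\<Sum>T\<in>Pow {..<N}. cnj (lamT b' T) * (\<Sum>i<2 ^ N. gT T i i))"
  have "S = cnj (lamT b' {}) * (\<Sum>i<2 ^ N. gT {} i i) + (\<Sum>T\<in>Pow {..<N} - {{}}. cnj (lamT b' T) * (\<Sum>i<2 ^ N. gT T i i))"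
    unfolding S_def by (rule sum.remove) auto
  also have "(\<Sum>T\<in>Pow {..<N} - {{}}. cnj (lamT b' T) * (\<Sum>i<2 ^ N. gT T i i)) = 0"
    by (intro sum.neutral) (auto simp: trace_gT_zero)
  finally have S1: "S = 2 ^ N" by (simp add: gT_empty trace_ident lamT_def)
  have "S = (\<Sum>T\<in>Pow {..<N}. \<Sum>b''<2 ^ N. cnj (lamT b' T) * lamT b'' T)"
    unfolding S_def by (intro sum.cong refl) (simp add: gT_trace sum_distrib_left)
  also have "\<dots> = (\<Sum>b''<2 ^ N. \<Sum>T\<in>Pow {..<N}. cnj (lamT b' T) * lamT b'' T)"
    by (rule sum.swap)
  also have "\<dots> = (\<Sum>b''<2 ^ N. if \<forall>l<N. lam b'' l = lam b' l then 2 ^ N else 0)"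
    using orth_prod assms(2) by (intro sum.cong refl) auto
  also have "\<dots> = 2 ^ N * of_nat (card {b''. b'' < 2 ^ N \<and> (\<forall>l<N. lam b'' l = lam b' l)})"
    by (simp add: sum.If_cases Int_def conj_commute)
  finally have "of_nat (card {b''. b'' < 2 ^ N \<and> (\<forall>l<N. lam b'' l = lam b' l)}) = (1::complex)"
    using S1 by simp
  then have c1: "card {b''. b'' < 2 ^ N \<and> (\<forall>l<N. lam b'' l = lam b' l)} = 1"
    by simp
  have "b \<in> {b''. b'' < 2 ^ N \<and> (\<forall>l<N. lam b'' l = lam b' l)}"
    "b' \<in> {b''. b'' < 2 ^ N \<and> (\<forall>l<N. lam b'' l = lam b' l)}"
    using assms by auto
  moreover obtain x where "{b''. b'' < 2 ^ N \<and> (\<forall>l<N. lam b'' l = lam b' l)} = {x}"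
    using c1 card_1_singletonE by blast
  ultimately show ?thesis by auto
qed

lemma orth_lam:
  assumes "b < 2 ^ N" "b' < 2 ^ N"
  shows "(\<Sum>T\<in>Pow {..<N}. cnj (lamT b' T) * lamT b T) = (if b = b' then 2 ^ N else 0)"
  using orth_prod[OF assms] distinct_pattern[OF assms] by auto

end

context stab
begin

lemma F2:
  assumes "b < 2 ^ N" "i < 2 ^ N" "j < 2 ^ N"
  shows "Phi b i * cnj (Phi b j) = (\<Sum>T\<in>Pow {..<N}. cnj (lamT b T) * gT T i j) / 2 ^ N"
proof -
  have "(\<Sum>T\<in>Pow {..<N}. cnj (lamT b T) * gT T i j)
      = (\<Sum>T\<in>Pow {..<N}. \<Sum>b'<2 ^ N. cnj (lamT b T) * lamT b' T * (Phi b' i * cnj (Phi b' j)))"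
    using gT_spec assms(2,3) by (intro sum.cong refl) (auto simp: sum_distrib_left mult.assoc)
  also have "\<dots> = (\<Sum>b'<2 ^ N. \<Sum>T\<in>Pow {..<N}. cnj (lamT b T) * lamT b' T * (Phi b' i * cnj (Phi b' j)))"
    by (rule sum.swap)
  also have "\<dots> = (\<Sum>b'<2 ^ N. (if b' = b then 2 ^ N else 0) * (Phi b' i * cnj (Phi b' j)))"
    by (intro sum.cong refl) (simp add: sum_distrib_right[symmetric] orth_lam assms(1))
  also have "\<dots> = (\<Sum>b'<2 ^ N. if b' = b then 2 ^ N * (Phi b' i * cnj (Phi b' j)) else 0)"
    by (intro sum.cong refl) simp
  also have "\<dots> = 2 ^ N * (Phi b i * cnj (Phi b j))"
    using assms(1) by simp
  finally show ?thesis by simp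
qed

lemma spec_mult:
  assumes "i < 2 ^ N" "j < 2 ^ N"
  shows "(\<Sum>l<2 ^ N. (\<Sum>b<2 ^ N. \<alpha> b * Phi b i * cnj (Phi b l)) * (\<Sum>b<2 ^ N. \<beta> b * Phi b l * cnj (Phi b j)))
       = (\<Sum>b<2 ^ N. \<alpha> b * \<beta> b * Phi b i * cnj (Phi b j))"
proof -
  let ?F = "\<lambda>b b'. \<alpha> b * Phi b i * (\<beta> b' * cnj (Phi b' j))"
  have "(\<Sum>l<2 ^ N. (\<Sum>b<2 ^ N. \<alpha> b * Phi b i * cnj (Phi b l)) * (\<Sum>b<2 ^ N. \<beta> b * Phi b l * cnj (Phi b j)))
      = (\<Sum>l<2 ^ N. \<Sum>b<2 ^ N. \<Sum>b'<2 ^ N. ?F b b' * (cnj (Phi b l) * Phi b' l))"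
    by (intro sum.cong refl) (simp add: sum_product mult_ac)
  also have "\<dots> = (\<Sum>b<2 ^ N. \<Sum>l<2 ^ N. \<Sum>b'<2 ^ N. ?F b b' * (cnj (Phi b l) * Phi b' l))"
    by (rule sum.swap)
  also have "\<dots> = (\<Sum>b<2 ^ N. \<Sum>b'<2 ^ N. \<Sum>l<2 ^ N. ?F b b' * (cnj (Phi b l) * Phi b' l))"
    by (rule sum.cong[OF refl], rule sum.swap)
  also have "\<dots> = (\<Sum>b<2 ^ N. \<Sum>b'<2 ^ N. ?F b b' * (if b = b' then 1 else 0))"
    by (intro sum.cong refl) (simp add: sum_distrib_left[symmetric] orth')
  also have "\<dots> = (\<Sum>b<2 ^ N. \<Sum>b'<2 ^ N. if b' = b then ?F b b' else 0)"
    by (intro sum.cong refl) auto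
  also have "\<dots> = (\<Sum>b<2 ^ N. ?F b b)"
    by (intro sum.cong refl) simp
  finally show ?thesis by (simp add: mult_ac)
qed

definition kap :: "nat set \<Rightarrow> nat set \<Rightarrow> complex" where
  "kap T T' = (\<Prod>l\<in>T \<inter> T'. (cP l)\<^sup>2)"

lemma sdiff_sub: "T \<subseteq> {..<N} \<Longrightarrow> T' \<subseteq> {..<N} \<Longrightarrow> sdiff T T' \<subseteq> {..<N}"
  unfolding sdiff_def by auto

lemma lamT_mult:
  assumes "b < 2 ^ N" "T \<subseteq> {..<N}" "T' \<subseteq> {..<N}"
  shows "lamT b T * lamT b T' = kap T T' * lamT b (sdiff T T')"
proof -
  have fin: "finite T" "finite T'" using assms finite_subset by blast+
  have e1: "lamT b T = (\<Prod>l\<in>T - T'. lam b l) * (\<Prod>l\<in>T \<inter> T'. lam b l)"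
    unfolding lamT_def using fin by (subst prod.union_disjoint[symmetric]) (auto intro!: prod.cong)
  have e2: "lamT b T' = (\<Prod>l\<in>T' - T. lam b l) * (\<Prod>l\<in>T \<inter> T'. lam b l)"
    unfolding lamT_def using fin by (subst prod.union_disjoint[symmetric]) (auto intro!: prod.cong)
  have e3: "lamT b (sdiff T T') = (\<Prod>l\<in>T - T'. lam b l) * (\<Prod>l\<in>T' - T. lam b l)"
    unfolding lamT_def sdiff_def using fin by (subst prod.union_disjoint) auto
  have e4: "(\<Prod>l\<in>T \<inter> T'. lam b l) * (\<Prod>l\<in>T \<inter> T'. lam b l) = kap T T'"
    unfolding kap_def prod.distrib[symmetric] using lam_sq assms
    by (intro prod.cong refl) (auto simp: power2_eq_square)
  show ?thesis unfolding e1 e2 e3 e4[symmetric] by (simp add: mult_ac)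
qed

lemma gT_mult:
  assumes "T \<subseteq> {..<N}" "T' \<subseteq> {..<N}"
  shows "mmult N (gT T) (gT T') = (\<lambda>i j. kap T T' * gT (sdiff T T') i j)"
proof (intro ext)
  fix i j
  show "mmult N (gT T) (gT T') i j = kap T T' * gT (sdiff T T') i j"
  proof (cases "i < 2 ^ N \<and> j < 2 ^ N")
    case True
    have "mmult N (gT T) (gT T') i j = (\<Sum>l<2 ^ N. (\<Sum>b<2 ^ N. lamT b T * Phi b i * cnj (Phi b l)) * (\<Sum>b<2 ^ N. lamT b T' * Phi b l * cnj (Phi b j)))"
      unfolding mmult_def using True gT_spec assms by (intro sum.cong refl) auto
    also have "\<dots> = (\<Sum>b<2 ^ N. lamT b T * lamT b T' * Phi b i * cnj (Phi b j))"
      using True by (intro spec_mult) auto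
    also have "\<dots> = (\<Sum>b<2 ^ N. kap T T' * (lamT b (sdiff T T') * Phi b i * cnj (Phi b j)))"
      using lamT_mult assms by (intro sum.cong refl) (auto simp: mult_ac)
    also have "\<dots> = kap T T' * gT (sdiff T T') i j"
      using gT_spec[OF sdiff_sub[OF assms]] True by (simp add: sum_distrib_left)
    finally show ?thesis .
  next
    case False
    have "gT (sdiff T T') i j = 0" using gT_zero_out[OF sdiff_sub[OF assms] False] .
    moreover have "mmult N (gT T) (gT T') i j = 0"
      unfolding mmult_def using False gT_zero_out assms by (intro sum.neutral) auto
    ultimately show ?thesis by simp
  qed
qed

end

lemma mtrace_comm:
  fixes X Y :: "'a :: comm_semiring_1 mat"
  assumes X: "X \<in> carrier_mat d e" and Y: "Y \<in> carrier_mat e d"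
  shows "(\<Sum>i<d. (X * Y) $$ (i, i)) = (\<Sum>k<e. (Y * X) $$ (k, k))"
proof -
  have "(\<Sum>i<d. (X * Y) $$ (i, i)) = (\<Sum>i<d. \<Sum>k<e. X $$ (i, k) * Y $$ (k, i))"
    using X Y by (intro sum.cong refl) (auto simp: scalar_prod_def atLeast0LessThan)
  also have "\<dots> = (\<Sum>k<e. \<Sum>i<d. Y $$ (k, i) * X $$ (i, k))"
    by (subst sum.swap) (simp add: mult.commute)
  also have "\<dots> = (\<Sum>k<e. (Y * X) $$ (k, k))"
    using X Y by (intro sum.cong refl) (auto simp: scalar_prod_def atLeast0LessThan)
  finally show ?thesis .
qed

lemma prod_two_vals:
  fixes c :: "'a :: field"
  assumes "set L \<subseteq> {0, c}" "c \<noteq> 0"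
  shows "(\<Prod>t\<leftarrow>L. [:- t, 1:]) = [:- c, 1:] ^ length (filter (\<lambda>t. t = c) L) * [:0, 1:] ^ length (filter (\<lambda>t. t \<noteq> c) L)
      \<and> sum_list L = of_nat (length (filter (\<lambda>t. t = c) L)) * c"
  using assms(1)
proof (induction L)
  case Nil
  then show ?case by simp
next
  case (Cons a L)
  then have IH: "(\<Prod>t\<leftarrow>L. [:- t, 1:]) = [:- c, 1:] ^ length (filter (\<lambda>t. t = c) L) * [:0, 1:] ^ length (filter (\<lambda>t. t \<noteq> c) L)"
    "sum_list L = of_nat (length (filter (\<lambda>t. t = c) L)) * c" by auto
  have "a = 0 \<or> a = c" using Cons.prems by auto
  then show ?case
  proof
    assume "a = 0"
    then show ?thesis using IH assms(2) by (simp add: mult_ac)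
  next
    assume "a = c"
    then show ?thesis using IH by (simp add: mult_ac algebra_simps)
  qed
qed

lemma scaled_proj_charpoly:
  fixes A :: "complex mat"
  assumes A: "A \<in> carrier_mat d d" and sq: "A * A = c \<cdot>\<^sub>m A"
    and tr: "(\<Sum>i<d. A $$ (i, i)) = 1" and c: "c \<noteq> 0"
  shows "\<exists>r. char_poly A = [:- c, 1:] ^ r * [:0, 1:] ^ (d - r) \<and> of_nat r * c = 1"
proof -
  obtain es where es: "char_poly A = (\<Prod>a\<leftarrow>es. [:- a, 1:])" using char_poly_factorized[OF A] by blast
  obtain B where B: "B \<in> carrier_mat d d" "upper_triangular B" "similar_mat A B"
    using schur_decomposition_exists[OF A es] by blast
  obtain d' P Q where PQ: "{A, B, P, Q} \<subseteq> carrier_mat d' d'" "P * Q = 1\<^sub>m d'" "Q * P = 1\<^sub>m d'" "A = P * B * Q"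
    using similar_matD[OF B(3)] by blast
  have dd: "d' = d" using PQ(1) A by auto
  have P: "P \<in> carrier_mat d d" and Q: "Q \<in> carrier_mat d d" using PQ(1) dd by auto
  have QP: "Q * P = 1\<^sub>m d" and PQ1: "P * Q = 1\<^sub>m d" using PQ dd by auto
  have BQAP: "B = Q * A * P"
  proof -
    have "Q * A * P = Q * (P * B * Q) * P" using PQ(4) by simp
    also have "\<dots> = (Q * P) * B * (Q * P)" using P Q B(1) by (simp add: assoc_mult_mat[of _ d d _ d _ d])
    also have "\<dots> = B" using QP B(1) by simp
    finally show ?thesis by simp
  qed
  have BB: "B * B = c \<cdot>\<^sub>m B"
  proof -
    have "B * B = Q * A * (P * Q) * A * P" unfolding BQAP using P Q A
      by (simp add: assoc_mult_mat[of _ d d _ d _ d])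
    also have "\<dots> = Q * (A * A) * P" using PQ1 P Q A by (simp add: assoc_mult_mat[of _ d d _ d _ d])
    also have "\<dots> = c \<cdot>\<^sub>m (Q * A * P)" unfolding sq using P Q A
      by (simp add: mult_smult_distrib mult_smult_assoc_mat[of _ d d _ d])
    finally show ?thesis unfolding BQAP .
  qed
  have diag: "B $$ (i, i) = 0 \<or> B $$ (i, i) = c" if i: "i < d" for i
  proof -
    have "(B * B) $$ (i, i) = (\<Sum>k\<in>{0..<d}. B $$ (i, k) * B $$ (k, i))"
      using B(1) i by (simp add: scalar_prod_def)
    also have "\<dots> = (\<Sum>k\<in>{0..<d}. if k = i then B $$ (i, i) * B $$ (i, i) else 0)"
    proof (intro sum.cong refl)
      fix k assume k: "k \<in> {0..<d}"
      show "B $$ (i, k) * B $$ (k, i) = (if k = i then B $$ (i, i) * B $$ (i, i) else 0)"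
      proof (cases "k < i")
        case True
        then have "B $$ (i, k) = 0" using B i by (intro upper_triangularD[OF B(2)]) auto
        then show ?thesis using True by simp
      next
        case False
        show ?thesis
        proof (cases "k = i")
          case False
          then have "B $$ (k, i) = 0" using \<open>\<not> k < i\<close> B k by (intro upper_triangularD[OF B(2)]) auto
          then show ?thesis using False by simp
        qed simp
      qed
    qed
    also have "\<dots> = B $$ (i, i) * B $$ (i, i)" using i by simp
    finally have "(B * B) $$ (i, i) = B $$ (i, i) * B $$ (i, i)" .
    moreover have "(B * B) $$ (i, i) = c * B $$ (i, i)" using BB B(1) i by simp
    ultimately have "B $$ (i, i) * B $$ (i, i) = c * B $$ (i, i)" by (rule subst)
    then have "B $$ (i, i) * (B $$ (i, i) - c) = 0" by (simp add: algebra_simps)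
    then show ?thesis by auto
  qed
  have trB: "(\<Sum>i<d. B $$ (i, i)) = 1"
  proof -
    have "(\<Sum>i<d. B $$ (i, i)) = (\<Sum>i<d. ((Q * A) * P) $$ (i, i))" using BQAP by simp
    also have "\<dots> = (\<Sum>i<d. (P * (Q * A)) $$ (i, i))" using P Q A by (intro mtrace_comm) auto
    also have "P * (Q * A) = A" using P Q A PQ1 by (simp add: assoc_mult_mat[symmetric, of P d d Q d A d])
    finally show ?thesis using tr by simp
  qed
  have cp: "char_poly A = (\<Prod>t\<leftarrow>diag_mat B. [:- t, 1:])"
    using char_poly_similar[OF B(3)] char_poly_upper_triangular[OF B(1,2)] by simp
  have setd: "set (diag_mat B) \<subseteq> {0, c}"
  proof
    fix t assume "t \<in> set (diag_mat B)"
    then obtain i where "i < d" "t = B $$ (i, i)" using B(1) unfolding diag_mat_def by auto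
    then show "t \<in> {0, c}" using diag[of i] by blast
  qed
  have sumd: "sum_list (diag_mat B) = 1"
    using trB B(1) unfolding diag_mat_def by (simp add: sum_list_distinct_conv_sum_set atLeast0LessThan)
  have lend: "length (diag_mat B) = d" using B(1) unfolding diag_mat_def by simp
  define r where "r = length (filter (\<lambda>t. t = c) (diag_mat B))"
  have "length (filter (\<lambda>t. t \<noteq> c) (diag_mat B)) = d - r"
    using sum_length_filter_compl[of "\<lambda>t. t = c" "diag_mat B"] lend unfolding r_def by simp
  then show ?thesis using prod_two_vals[OF setd c] cp sumd unfolding r_def[symmetric]
    by (intro exI[of _ r]) simp
qed

lemma vn_entropy_proj:
  fixes A :: "complex mat"
  assumes A: "A \<in> carrier_mat d d" and sq: "A * A = complex_of_real x \<cdot>\<^sub>m A"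
    and tr: "(\<Sum>i<d. A $$ (i, i)) = 1" and x: "x > 0"
  shows "vn_entropy A = - log 2 x"
proof -
  let ?c = "complex_of_real x"
  obtain r where r: "char_poly A = [:- ?c, 1:] ^ r * [:0, 1:] ^ (d - r)" "of_nat r * ?c = 1"
    using scaled_proj_charpoly[OF A sq tr] x by auto
  have rx: "real r * x = 1" using r(2) by (metis of_real_eq_1_iff of_real_mult of_real_of_nat_eq)
  have c0: "?c \<noteq> 0" using x by simp
  have roots: "{lam. poly (char_poly A) lam = 0 \<and> lam \<noteq> 0} = {?c}"
  proof -
    have "poly (char_poly A) lam = (lam - ?c) ^ r * lam ^ (d - r)" for lam
      unfolding r(1) by (simp add: poly_power)
    moreover have "r \<noteq> 0" using rx by (cases "r = 0") auto
    ultimately show ?thesis using c0 by auto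
  qed
  have ord: "Polynomial.order ?c (char_poly A) = r"
  proof -
    have nz: "[:- ?c, 1:] ^ r * [:0, 1:] ^ (d - r) \<noteq> 0" by simp
    have "Polynomial.order ?c ([:0, 1:] ^ (d - r)) = 0" using c0 by (intro order_0I) (simp add: poly_power)
    then show ?thesis unfolding r(1) using order_mult[OF nz] order_power_n_n by simp
  qed
  show ?thesis unfolding vn_entropy_def roots using ord rx by simp
qed

lemma pauli_scale: "(\<lambda>i j. a * pauli_op N c ps i j) = pauli_op N (a * c) ps"
  unfolding pauli_op_def by (intro ext) auto

lemma pauli_unique:
  assumes eq: "pauli_op N c ps = pauli_op N d qs" and c: "c \<noteq> 0"
  shows "(\<forall>k<N. ps k = qs k) \<and> c = d"
proof -
  have h1: "(\<Sum>i<2 ^ N. \<Sum>j<2 ^ N. cnj (pauli_op N c ps i j) * pauli_op N c ps i j) = cnj c * c * 2 ^ N"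
    using pauli_op_hs[of N c ps c ps] by simp
  have h2: "(\<Sum>i<2 ^ N. \<Sum>j<2 ^ N. cnj (pauli_op N c ps i j) * pauli_op N c ps i j)
      = cnj c * d * (\<Prod>k<N. if ps k = qs k then 2 else 0)"
    using pauli_op_hs[of N c ps d qs] eq by simp
  have cc: "cnj c * c \<noteq> 0" using c by simp
  have all: "\<forall>k<N. ps k = qs k"
  proof (rule ccontr)
    assume "\<not> (\<forall>k<N. ps k = qs k)"
    then obtain k where "k < N" "ps k \<noteq> qs k" by auto
    then have z: "(\<Prod>k<N. if ps k = qs k then 2 else 0) = (0::complex)" by (intro prod_zero) auto
    have "cnj c * c * 2 ^ N = cnj c * d * (\<Prod>k<N. if ps k = qs k then 2 else 0)"
      by (rule trans[OF h1[symmetric] h2])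
    then have "cnj c * c * 2 ^ N = 0" by (simp only: z mult_zero_right)
    then show False using cc by simp
  qed
  then have p2: "(\<Prod>k<N. if ps k = qs k then 2 else 0) = (2::complex) ^ N" by simp
  have "cnj c * c * 2 ^ N = cnj c * d * (\<Prod>k<N. if ps k = qs k then 2 else 0)"
    by (rule trans[OF h1[symmetric] h2])
  then have "cnj c * c * 2 ^ N = cnj c * d * 2 ^ N" unfolding p2 .
  then show ?thesis using all c by auto
qed

context stab
begin

lemma kap_norm: "T \<subseteq> {..<N} \<Longrightarrow> cmod (kap T T') = 1"
  unfolding kap_def prod_norm[symmetric] using cP_norm by (intro prod.neutral) (auto simp: norm_power)

lemma gs_sdiff:
  assumes "T \<subseteq> {..<N}" "T' \<subseteq> {..<N}"
  shows "(\<forall>k<N. gs (sdiff T T') k = pm (gs T k) (gs T' k))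
    \<and> kap T T' * gc (sdiff T T') = gc T * gc T' * (\<Prod>k<N. ph (gs T k) (gs T' k))"
proof -
  have "pauli_op N (kap T T' * gc (sdiff T T')) (gs (sdiff T T')) = (\<lambda>i j. kap T T' * gT (sdiff T T') i j)"
    using gT_rep(1)[OF sdiff_sub[OF assms]] pauli_scale by metis
  also have "\<dots> = mmult N (gT T) (gT T')" using gT_mult[OF assms] by simp
  also have "\<dots> = pauli_op N (gc T * gc T' * (\<Prod>k<N. ph (gs T k) (gs T' k))) (\<lambda>k. pm (gs T k) (gs T' k))"
    using gT_rep(1)[OF assms(1)] gT_rep(1)[OF assms(2)] pauli_op_mult by metis
  finally have e: "pauli_op N (kap T T' * gc (sdiff T T')) (gs (sdiff T T')) = \<dots>" .
  have "kap T T' * gc (sdiff T T') \<noteq> 0"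
    using kap_norm[OF assms(1), of T'] gT_rep(2)[OF sdiff_sub[OF assms]] by (auto simp: norm_mult)
  then show ?thesis using pauli_unique[OF e] by simp
qed

definition anc_triv :: "nat set \<Rightarrow> bool" where
  "anc_triv T \<longleftrightarrow> (\<forall>k<m. gs T k = PI)"

definition AA :: "nat set set" where
  "AA = {T \<in> Pow {..<N}. anc_triv T}"

definition dstr :: "nat set \<Rightarrow> nat \<Rightarrow> pauli1" where
  "dstr T = (\<lambda>k. if k < n then gs T (m + k) else PI)"

definition K :: "nat set \<Rightarrow> nat \<Rightarrow> nat \<Rightarrow> complex" where
  "K T a a' = gc T * pauli_op n 1 (dstr T) a a'"

lemma AA_fin: "finite AA" unfolding AA_def by simp

lemma gT_tensor:
  assumes "T \<subseteq> {..<N}" "a < 2 ^ n" "a' < 2 ^ n" "c1 < 2 ^ m" "c2 < 2 ^ m"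
  shows "gT T (a * 2 ^ m + c1) (a' * 2 ^ m + c2) = gc T * pauli_op m 1 (gs T) c1 c2 * pauli_op n 1 (dstr T) a a'"
proof -
  have "pauli_op n 1 (\<lambda>k. gs T (m + k)) = pauli_op n 1 (dstr T)"
    unfolding dstr_def by (rule pauli_op_cong) simp
  then show ?thesis using gT_rep(1)[OF assms(1)] pauli_op_tensor[OF assms(2-5)] by simp
qed

lemma anc_sum:
  assumes "T \<subseteq> {..<N}" "a < 2 ^ n" "a' < 2 ^ n"
  shows "(\<Sum>c<2 ^ m. gT T (a * 2 ^ m + c) (a' * 2 ^ m + c)) = (if anc_triv T then 2 ^ m * K T a a' else 0)"
proof -
  have "(\<Sum>c<2 ^ m. gT T (a * 2 ^ m + c) (a' * 2 ^ m + c)) = (\<Sum>c<2 ^ m. pauli_op m 1 (gs T) c c) * K T a a'"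
  proof -
    have "(\<Sum>c<2 ^ m. gT T (a * 2 ^ m + c) (a' * 2 ^ m + c)) = (\<Sum>c<2 ^ m. pauli_op m 1 (gs T) c c * K T a a')"
      by (intro sum.cong refl) (simp add: gT_tensor[OF assms] K_def mult_ac)
    then show ?thesis by (simp add: sum_distrib_right)
  qed
  also have "(\<Sum>c<2 ^ m. pauli_op m 1 (gs T) c c) = (\<Prod>k<m. if gs T k = PI then 2 else 0)"
    using pauli_op_trace[of m 1 "gs T"] by simp
  also have "\<dots> = (if anc_triv T then 2 ^ m else 0)"
  proof (cases "anc_triv T")
    case False
    then obtain k where "k < m" "gs T k \<noteq> PI" unfolding anc_triv_def by auto
    then show ?thesis using False by (intro trans[OF prod_zero]) auto
  qed (simp add: anc_triv_def)
  finally show ?thesis by simp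
qed

definition R :: "nat \<Rightarrow> nat \<Rightarrow> nat \<Rightarrow> complex" where
  "R b a a' = (\<Sum>T\<in>AA. cnj (lamT b T) * K T a a') / 2 ^ n"

lemma red_entry:
  assumes "b < 2 ^ N" "a < 2 ^ n" "a' < 2 ^ n"
  shows "(\<Sum>c<2 ^ m. Phi b (a * 2 ^ m + c) * cnj (Phi b (a' * 2 ^ m + c))) = R b a a'"
proof -
  have "(\<Sum>c<2 ^ m. Phi b (a * 2 ^ m + c) * cnj (Phi b (a' * 2 ^ m + c)))
     = (\<Sum>c<2 ^ m. (\<Sum>T\<in>Pow {..<N}. cnj (lamT b T) * gT T (a * 2 ^ m + c) (a' * 2 ^ m + c)) / 2 ^ N)"
    using assms by (intro sum.cong refl F2) (auto intro: tensor_idx_lt)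
  also have "\<dots> = (\<Sum>T\<in>Pow {..<N}. cnj (lamT b T) * (\<Sum>c<2 ^ m. gT T (a * 2 ^ m + c) (a' * 2 ^ m + c))) / 2 ^ N"
    by (simp add: sum_divide_distrib[symmetric] sum_distrib_left sum.swap[of _ "{..<2 ^ m}"])
  also have "\<dots> = (\<Sum>T\<in>Pow {..<N}. if anc_triv T then cnj (lamT b T) * (2 ^ m * K T a a') else 0) / 2 ^ N"
    using anc_sum assms by (intro arg_cong2[where f = "(/)"] sum.cong refl) auto
  also have "\<dots> = (\<Sum>T\<in>AA. cnj (lamT b T) * (2 ^ m * K T a a')) / 2 ^ N"
    unfolding AA_def by (subst sum.inter_filter) auto
  also have "\<dots> = R b a a'"
    unfolding R_def by (simp add: sum_distrib_left[symmetric] power_add field_simps)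
  finally show ?thesis .
qed

end

context stab
begin

lemma sdiff_inv: "sdiff T (sdiff T T') = T'"
  unfolding sdiff_def by auto

lemma dstr_sdiff:
  assumes "T \<subseteq> {..<N}" "T' \<subseteq> {..<N}"
  shows "dstr (sdiff T T') = (\<lambda>k. pm (dstr T k) (dstr T' k))"
proof (rule ext)
  fix k show "dstr (sdiff T T') k = pm (dstr T k) (dstr T' k)"
    using gs_sdiff[OF assms] unfolding dstr_def by auto
qed

lemma AA_sdiff:
  assumes "T \<in> AA" "T' \<in> AA"
  shows "sdiff T T' \<in> AA"
proof -
  have s: "T \<subseteq> {..<N}" "T' \<subseteq> {..<N}" using assms unfolding AA_def by auto
  have "anc_triv (sdiff T T')"
    using gs_sdiff[OF s] assms unfolding AA_def anc_triv_def by auto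
  then show ?thesis using sdiff_sub[OF s] unfolding AA_def by auto
qed

lemma ph_split:
  assumes "T \<in> AA" "T' \<in> AA"
  shows "(\<Prod>k<N. ph (gs T k) (gs T' k)) = (\<Prod>k<n. ph (dstr T k) (dstr T' k))"
proof -
  have "(\<Prod>k<n + m. ph (gs T k) (gs T' k)) = (\<Prod>k<m. ph (gs T k) (gs T' k)) * (\<Prod>k<n. ph (gs T (m + k)) (gs T' (m + k)))"
    by (rule prod_add_split)
  also have "(\<Prod>k<m. ph (gs T k) (gs T' k)) = 1"
    using assms unfolding AA_def anc_triv_def by (intro prod.neutral) auto
  also have "(\<Prod>k<n. ph (gs T (m + k)) (gs T' (m + k))) = (\<Prod>k<n. ph (dstr T k) (dstr T' k))"
    unfolding dstr_def by (intro prod.cong) auto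
  finally show ?thesis by simp
qed

lemma K_mult:
  assumes "T \<in> AA" "T' \<in> AA" "a < 2 ^ n" "a'' < 2 ^ n"
  shows "(\<Sum>a'<2 ^ n. K T a a' * K T' a' a'') = kap T T' * K (sdiff T T') a a''"
proof -
  have s: "T \<subseteq> {..<N}" "T' \<subseteq> {..<N}" using assms unfolding AA_def by auto
  have "(\<Sum>a'<2 ^ n. K T a a' * K T' a' a'') = gc T * gc T' * mmult n (pauli_op n 1 (dstr T)) (pauli_op n 1 (dstr T')) a a''"
    unfolding K_def mmult_def by (simp add: sum_distrib_left mult_ac)
  also have "\<dots> = gc T * gc T' * pauli_op n (\<Prod>k<n. ph (dstr T k) (dstr T' k)) (\<lambda>k. pm (dstr T k) (dstr T' k)) a a''"
    by (simp add: pauli_op_mult)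
  also have "\<dots> = gc T * gc T' * (\<Prod>k<n. ph (dstr T k) (dstr T' k)) * pauli_op n 1 (dstr (sdiff T T')) a a''"
    using fun_cong[OF fun_cong[OF pauli_scale[of "\<Prod>k<n. ph (dstr T k) (dstr T' k)" n 1 "\<lambda>k. pm (dstr T k) (dstr T' k)"]]]
    by (simp add: dstr_sdiff[OF s] mult_ac)
  also have "gc T * gc T' * (\<Prod>k<n. ph (dstr T k) (dstr T' k)) = kap T T' * gc (sdiff T T')"
    using gs_sdiff[OF s] ph_split[OF assms(1,2)] by simp
  finally show ?thesis unfolding K_def by (simp add: mult_ac)
qed

lemma lam_cnj_kap:
  assumes "b < 2 ^ N" "T \<subseteq> {..<N}" "T' \<subseteq> {..<N}"
  shows "cnj (lamT b T) * cnj (lamT b T') * kap T T' = cnj (lamT b (sdiff T T'))"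
proof -
  have "cnj (lamT b T) * cnj (lamT b T') = cnj (kap T T' * lamT b (sdiff T T'))"
    by (simp only: complex_cnj_mult[symmetric] lamT_mult[OF assms])
  then have "cnj (lamT b T) * cnj (lamT b T') * kap T T' = cnj (kap T T' * lamT b (sdiff T T')) * kap T T'"
    by simp
  also have "\<dots> = (cnj (kap T T') * kap T T') * cnj (lamT b (sdiff T T'))" by (simp add: mult_ac)
  also have "cnj (kap T T') * kap T T' = 1"
    using kap_norm[OF assms(2), of T'] complex_norm_square[of "kap T T'"] by (simp add: mult.commute)
  finally show ?thesis by simp
qed

lemma rho_sq:
  assumes "b < 2 ^ N" "a < 2 ^ n" "a'' < 2 ^ n"
  shows "(\<Sum>a'<2 ^ n. R b a a' * R b a' a'') = of_nat (card AA) / 2 ^ n * R b a a''"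
proof -
  let ?c = "\<lambda>T. cnj (lamT b T)"
  have pr: "R b a a' * R b a' a'' = (\<Sum>T\<in>AA. \<Sum>T'\<in>AA. ?c T * ?c T' * (K T a a' * K T' a' a'')) / 2 ^ n / 2 ^ n" for a'
    unfolding R_def by (simp add: sum_product mult_ac)
  have "(\<Sum>a'<2 ^ n. R b a a' * R b a' a'')
      = (\<Sum>a'<2 ^ n. \<Sum>T\<in>AA. \<Sum>T'\<in>AA. ?c T * ?c T' * (K T a a' * K T' a' a'')) / 2 ^ n / 2 ^ n"
    unfolding pr by (simp add: sum_divide_distrib)
  also have "(\<Sum>a'<2 ^ n. \<Sum>T\<in>AA. \<Sum>T'\<in>AA. ?c T * ?c T' * (K T a a' * K T' a' a''))
      = (\<Sum>T\<in>AA. \<Sum>T'\<in>AA. \<Sum>a'<2 ^ n. ?c T * ?c T' * (K T a a' * K T' a' a''))"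
    by (simp add: sum.swap[of _ "{..<2 ^ n}"])
  also have "\<dots> = (\<Sum>T\<in>AA. \<Sum>T'\<in>AA. ?c (sdiff T T') * K (sdiff T T') a a'')"
  proof (intro sum.cong refl)
    fix T T' assume TT: "T \<in> AA" "T' \<in> AA"
    have s: "T \<subseteq> {..<N}" "T' \<subseteq> {..<N}" using TT unfolding AA_def by auto
    have "(\<Sum>a'<2 ^ n. ?c T * ?c T' * (K T a a' * K T' a' a'')) = ?c T * ?c T' * (kap T T' * K (sdiff T T') a a'')"
      by (simp add: sum_distrib_left[symmetric] K_mult[OF TT assms(2,3)])
    also have "\<dots> = ?c (sdiff T T') * K (sdiff T T') a a''"
      using lam_cnj_kap[OF assms(1) s] by (simp add: mult.assoc[symmetric])
    finally show "(\<Sum>a'<2 ^ n. ?c T * ?c T' * (K T a a' * K T' a' a'')) = ?c (sdiff T T') * K (sdiff T T') a a''" .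
  qed
  also have "\<dots> = (\<Sum>T\<in>AA. \<Sum>T''\<in>AA. ?c T'' * K T'' a a'')"
  proof (rule sum.cong[OF refl])
    fix T assume T: "T \<in> AA"
    show "(\<Sum>T'\<in>AA. ?c (sdiff T T') * K (sdiff T T') a a'') = (\<Sum>T''\<in>AA. ?c T'' * K T'' a a'')"
      by (rule sum.reindex_bij_witness[of _ "sdiff T" "sdiff T"]) (auto simp: sdiff_inv AA_sdiff T)
  qed
  also have "\<dots> = of_nat (card AA) * (\<Sum>T''\<in>AA. ?c T'' * K T'' a a'')" by simp
  finally show ?thesis unfolding R_def by (simp add: field_simps)
qed

lemma red_mat:
  assumes "b < 2 ^ N"
  shows "reduced_state n m (Phi b) = mat (2 ^ n) (2 ^ n) (\<lambda>(a, a'). R b a a')"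
  unfolding reduced_state_def using red_entry[OF assms] by (intro eq_matI) auto

lemma red_trace:
  assumes "b < 2 ^ N"
  shows "(\<Sum>a<2 ^ n. reduced_state n m (Phi b) $$ (a, a)) = 1"
proof -
  have "(\<Sum>a<2 ^ n. reduced_state n m (Phi b) $$ (a, a)) = (\<Sum>a<2 ^ n. \<Sum>c<2 ^ m. Phi b (a * 2 ^ m + c) * cnj (Phi b (a * 2 ^ m + c)))"
    unfolding reduced_state_def by simp
  also have "\<dots> = (\<Sum>i<2 ^ n * 2 ^ m. Phi b i * cnj (Phi b i))" by (rule sum_tensor)
  also have "\<dots> = 1" using norm_phi[OF assms] by (simp add: power_add)
  finally show ?thesis .
qed

lemma red_sq:
  assumes "b < 2 ^ N"
  shows "reduced_state n m (Phi b) * reduced_state n m (Phi b)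
     = complex_of_real (real (card AA) / 2 ^ n) \<cdot>\<^sub>m reduced_state n m (Phi b)"
proof -
  have "mat (2 ^ n) (2 ^ n) (\<lambda>(a, a'). R b a a') * mat (2 ^ n) (2 ^ n) (\<lambda>(a, a'). R b a a')
     = complex_of_real (real (card AA) / 2 ^ n) \<cdot>\<^sub>m mat (2 ^ n) (2 ^ n) (\<lambda>(a, a'). R b a a')"
  proof (rule eq_matI)
    fix i j assume ij: "i < dim_row (complex_of_real (real (card AA) / 2 ^ n) \<cdot>\<^sub>m mat (2 ^ n) (2 ^ n) (\<lambda>(a, a'). R b a a'))"
      "j < dim_col (complex_of_real (real (card AA) / 2 ^ n) \<cdot>\<^sub>m mat (2 ^ n) (2 ^ n) (\<lambda>(a, a'). R b a a'))"
    then have ij': "i < 2 ^ n" "j < 2 ^ n" by auto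
    have "(mat (2 ^ n) (2 ^ n) (\<lambda>(a, a'). R b a a') * mat (2 ^ n) (2 ^ n) (\<lambda>(a, a'). R b a a')) $$ (i, j)
        = (\<Sum>a'<2 ^ n. R b i a' * R b a' j)"
      using ij' by (simp add: scalar_prod_def atLeast0LessThan)
    also have "\<dots> = of_nat (card AA) / 2 ^ n * R b i j" by (rule rho_sq[OF assms ij'])
    finally show "(mat (2 ^ n) (2 ^ n) (\<lambda>(a, a'). R b a a') * mat (2 ^ n) (2 ^ n) (\<lambda>(a, a'). R b a a')) $$ (i, j)
        = (complex_of_real (real (card AA) / 2 ^ n) \<cdot>\<^sub>m mat (2 ^ n) (2 ^ n) (\<lambda>(a, a'). R b a a')) $$ (i, j)"
      using ij' by simp
  qed auto
  then show ?thesis unfolding red_mat[OF assms] .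
qed

lemma card_AA_pos: "card AA > 0"
proof -
  have "{} \<in> AA"
  proof -
    have "gs {} k = PI" if "k < N" for k
    proof -
      have "pauli_op N 1 (\<lambda>_. PI) = pauli_op N (gc {}) (gs {})" using gT_rep(1)[of "{}"] gT_empty ident_pauli by simp
      then show ?thesis using pauli_unique[of N 1 "\<lambda>_. PI" "gc {}" "gs {}"] that by auto
    qed
    then show ?thesis unfolding AA_def anc_triv_def by auto
  qed
  then show ?thesis using AA_fin card_gt_0_iff by blast
qed

lemma entropy_AA:
  assumes "b < 2 ^ N"
  shows "entanglement_entropy n m (Phi b) = - log 2 (real (card AA) / 2 ^ n)"
  unfolding entanglement_entropy_def
  by (rule vn_entropy_proj[OF _ red_sq[OF assms] red_trace[OF assms]])
     (auto simp: reduced_state_def card_AA_pos)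

end

lemma orbit_dvd:
  fixes f :: "'a \<Rightarrow> 'a \<Rightarrow> 'a"
  assumes assoc: "\<And>x y z. f (f x y) z = f x (f y z)" and comm: "\<And>x y. f x y = f y x"
    and inv: "\<And>x. f x x = e" and unit: "\<And>x. f x e = x"
    and H: "finite H" "e \<in> H" "\<And>h h'. h \<in> H \<Longrightarrow> h' \<in> H \<Longrightarrow> f h h' \<in> H"
  shows "finite D \<Longrightarrow> (\<And>d h. d \<in> D \<Longrightarrow> h \<in> H \<Longrightarrow> f d h \<in> D) \<Longrightarrow> card H dvd card D"
proof (induction "card D" arbitrary: D rule: less_induct)
  case less
  show ?case
  proof (cases "D = {}")
    case True
    then show ?thesis by simp
  next
    case False
    then obtain d where d: "d \<in> D" by auto
    define Orb where "Orb = f d ` H"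
    have bk: "f d (f d h) = h" for h
    proof -
      have "f d (f d h) = f (f d d) h" by (rule assoc[symmetric])
      also have "\<dots> = f e h" by (simp only: inv)
      also have "\<dots> = f h e" by (rule comm)
      also have "\<dots> = h" by (rule unit)
      finally show ?thesis .
    qed
    have inj: "inj_on (f d) H"
      unfolding inj_on_def
    proof (intro ballI impI)
      fix x y assume "f d x = f d y"
      then have "f d (f d x) = f d (f d y)" by simp
      then show "x = y" by (simp only: bk)
    qed
    have cO: "card Orb = card H" unfolding Orb_def using inj by (simp add: card_image)
    have OD: "Orb \<subseteq> D" unfolding Orb_def using less.prems(2) d by auto
    have dO: "d \<in> Orb" unfolding Orb_def by (rule image_eqI[of _ _ e]) (simp_all only: unit H(2))
    have fin': "finite (D - Orb)" using less.prems(1) by simp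
    have cl: "f x h \<in> D - Orb" if "x \<in> D - Orb" "h \<in> H" for x h
    proof
      show "f x h \<in> D" using less.prems(2) that by auto
      show "f x h \<notin> Orb"
      proof
        assume "f x h \<in> Orb"
        then obtain h' where h': "h' \<in> H" "f x h = f d h'" unfolding Orb_def by auto
        have "f (f x h) h = x" by (simp only: assoc inv unit)
        then have "x = f (f x h) h" by simp
        also have "\<dots> = f d (f h' h)" using h' assoc by simp
        finally have "x \<in> Orb" unfolding Orb_def using H(3)[OF h'(1) that(2)] by auto
        then show False using that by auto
      qed
    qed
    have lt: "card (D - Orb) < card D"
    proof (rule psubset_card_mono[OF less.prems(1)])
      show "D - Orb \<subset> D" using dO d by blast
    qed
    have "card H dvd card (D - Orb)" using less.hyps[OF lt fin'] cl by blast
    moreover have "card D = card Orb + card (D - Orb)"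
    proof -
      have fo: "finite Orb" using finite_subset[OF OD less.prems(1)] .
      have "card (D - Orb) = card D - card Orb" by (rule card_Diff_subset[OF fo OD])
      moreover have "card Orb \<le> card D" by (rule card_mono[OF less.prems(1) OD])
      ultimately show ?thesis by simp
    qed
    ultimately show ?thesis using cO by simp
  qed
qed

lemma sum_fun_apply: "(sum f A) x = (\<Sum>a\<in>A. f a x)"
  by (induction A rule: infinite_finite_induct) auto

lemma cvs: "vector_space cscale"
  by unfold_locales (auto simp: cscale_def algebra_simps fun_eq_iff)

interpretation CV: vector_space cscale by (rule cvs)

lemma sum_cscale_apply: "(\<Sum>x\<in>A. cscale (u x) (X x)) i j = (\<Sum>x\<in>A. u x * X x i j)"
  by (simp add: sum_fun_apply cscale_def)

definition pmstr :: "(nat \<Rightarrow> pauli1) \<Rightarrow> (nat \<Rightarrow> pauli1) \<Rightarrow> nat \<Rightarrow> pauli1" where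
  "pmstr x y = (\<lambda>k. pm (x k) (y k))"

context stab
begin

definition sandw :: "(nat \<Rightarrow> complex) \<Rightarrow> (nat \<Rightarrow> nat \<Rightarrow> complex) \<Rightarrow> nat \<Rightarrow> nat \<Rightarrow> complex" where
  "sandw psi X = (\<lambda>a a'. if a < 2 ^ n \<and> a' < 2 ^ n then
      (\<Sum>c<2 ^ m. \<Sum>c'<2 ^ m. cnj (psi c) * X (a * 2 ^ m + c) (a' * 2 ^ m + c') * psi c') else 0)"

lemma sandw_cong:
  assumes "\<And>i j. i < 2 ^ N \<Longrightarrow> j < 2 ^ N \<Longrightarrow> X i j = Y i j"
  shows "sandw psi X = sandw psi Y"
  unfolding sandw_def using assms tensor_idx_lt by (intro ext) (auto intro!: sum.cong)

lemma sandw_lin: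
  "sandw psi (\<lambda>i j. \<Sum>x\<in>S. u x * X x i j) = (\<Sum>x\<in>S. cscale (u x) (sandw psi (X x)))"
proof (intro ext)
  fix a a'
  show "sandw psi (\<lambda>i j. \<Sum>x\<in>S. u x * X x i j) a a' = (\<Sum>x\<in>S. cscale (u x) (sandw psi (X x))) a a'"
  proof (cases "a < 2 ^ n \<and> a' < 2 ^ n")
    case True
    have "sandw psi (\<lambda>i j. \<Sum>x\<in>S. u x * X x i j) a a'
        = (\<Sum>c<2 ^ m. \<Sum>c'<2 ^ m. \<Sum>x\<in>S. u x * (cnj (psi c) * X x (a * 2 ^ m + c) (a' * 2 ^ m + c') * psi c'))"
      unfolding sandw_def using True by (simp add: sum_distrib_left sum_distrib_right mult_ac)
    also have "\<dots> = (\<Sum>c<2 ^ m. \<Sum>x\<in>S. \<Sum>c'<2 ^ m. u x * (cnj (psi c) * X x (a * 2 ^ m + c) (a' * 2 ^ m + c') * psi c'))"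
      by (rule sum.cong[OF refl], rule sum.swap)
    also have "\<dots> = (\<Sum>x\<in>S. \<Sum>c<2 ^ m. \<Sum>c'<2 ^ m. u x * (cnj (psi c) * X x (a * 2 ^ m + c) (a' * 2 ^ m + c') * psi c'))"
      by (rule sum.swap)
    also have "\<dots> = (\<Sum>x\<in>S. cscale (u x) (sandw psi (X x))) a a'"
      unfolding sum_cscale_apply unfolding sandw_def using True by (simp add: sum_distrib_left)
    finally show ?thesis .
  next
    case False
    then show ?thesis unfolding sum_cscale_apply unfolding sandw_def using False by auto
  qed
qed

lemma mu_sandw:
  "mu_op n m psi (Phi b) = sandw psi (\<lambda>i j. Phi b i * cnj (Phi b j))"
proof (intro ext)
  fix a a'
  show "mu_op n m psi (Phi b) a a' = sandw psi (\<lambda>i j. Phi b i * cnj (Phi b j)) a a'"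
  proof (cases "a < 2 ^ n \<and> a' < 2 ^ n")
    case True
    have "mu_op n m psi (Phi b) a a' = (\<Sum>c<2 ^ m. cnj (psi c) * Phi b (a * 2 ^ m + c)) * (\<Sum>c'<2 ^ m. psi c' * cnj (Phi b (a' * 2 ^ m + c')))"
      unfolding mu_op_def outer_def partial_bra_def using True by (simp add: cnj_sum)
    also have "\<dots> = (\<Sum>c<2 ^ m. \<Sum>c'<2 ^ m. (cnj (psi c) * Phi b (a * 2 ^ m + c)) * (psi c' * cnj (Phi b (a' * 2 ^ m + c'))))"
      by (rule sum_product)
    also have "\<dots> = sandw psi (\<lambda>i j. Phi b i * cnj (Phi b j)) a a'"
      unfolding sandw_def using True by (simp add: mult_ac)
    finally show ?thesis .
  next
    case False
    then show ?thesis unfolding mu_op_def outer_def partial_bra_def sandw_def by auto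
  qed
qed

definition Sop :: "(nat \<Rightarrow> complex) \<Rightarrow> nat set \<Rightarrow> nat \<Rightarrow> nat \<Rightarrow> complex" where
  "Sop psi T = sandw psi (gT T)"

lemma Sop_spec:
  assumes "T \<subseteq> {..<N}"
  shows "Sop psi T = (\<Sum>b<2 ^ N. cscale (lamT b T) (mu_op n m psi (Phi b)))"
proof -
  have "Sop psi T = sandw psi (\<lambda>i j. \<Sum>b<2 ^ N. lamT b T * (Phi b i * cnj (Phi b j)))"
    unfolding Sop_def using gT_spec[OF assms] by (intro sandw_cong) (simp add: mult.assoc)
  also have "\<dots> = (\<Sum>b<2 ^ N. cscale (lamT b T) (mu_op n m psi (Phi b)))"
    by (simp add: sandw_lin mu_sandw)
  finally show ?thesis .
qed

lemma mu_spec: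
  assumes "b < 2 ^ N"
  shows "mu_op n m psi (Phi b) = (\<Sum>T\<in>Pow {..<N}. cscale (cnj (lamT b T) / 2 ^ N) (Sop psi T))"
proof -
  have "mu_op n m psi (Phi b) = sandw psi (\<lambda>i j. \<Sum>T\<in>Pow {..<N}. (cnj (lamT b T) / 2 ^ N) * gT T i j)"
    unfolding mu_sandw using F2[OF assms]
    by (intro sandw_cong) (simp add: sum_divide_distrib)
  also have "\<dots> = (\<Sum>T\<in>Pow {..<N}. cscale (cnj (lamT b T) / 2 ^ N) (Sop psi T))"
    unfolding Sop_def by (rule sandw_lin)
  finally show ?thesis .
qed

definition ancv :: "(nat \<Rightarrow> complex) \<Rightarrow> nat set \<Rightarrow> complex" where
  "ancv psi T = (\<Sum>c<2 ^ m. \<Sum>c'<2 ^ m. cnj (psi c) * pauli_op m 1 (gs T) c c' * psi c')"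

lemma Sop_pauli:
  assumes "T \<subseteq> {..<N}"
  shows "Sop psi T = cscale (gc T * ancv psi T) (pauli_op n 1 (dstr T))"
proof (intro ext)
  fix a a'
  show "Sop psi T a a' = cscale (gc T * ancv psi T) (pauli_op n 1 (dstr T)) a a'"
  proof (cases "a < 2 ^ n \<and> a' < 2 ^ n")
    case True
    have "Sop psi T a a' = (\<Sum>c<2 ^ m. \<Sum>c'<2 ^ m. gc T * pauli_op n 1 (dstr T) a a' * (cnj (psi c) * pauli_op m 1 (gs T) c c' * psi c'))"
      unfolding Sop_def sandw_def using True gT_tensor[OF assms] by (auto intro!: sum.cong simp: mult_ac)
    also have "\<dots> = cscale (gc T * ancv psi T) (pauli_op n 1 (dstr T)) a a'"
      unfolding cscale_def ancv_def by (simp add: sum_distrib_left mult_ac)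
    finally show ?thesis .
  next
    case False
    then show ?thesis unfolding Sop_def sandw_def cscale_def pauli_op_def by auto
  qed
qed

definition Wset :: "(nat \<Rightarrow> complex) \<Rightarrow> nat set set" where
  "Wset psi = {T \<in> Pow {..<N}. ancv psi T \<noteq> 0}"

definition Mset :: "(nat \<Rightarrow> complex) \<Rightarrow> (nat \<Rightarrow> nat \<Rightarrow> complex) set" where
  "Mset psi = {mu_op n m psi (Phi b) | b. b < 2 ^ N}"

definition Fset :: "(nat \<Rightarrow> complex) \<Rightarrow> (nat \<Rightarrow> nat \<Rightarrow> complex) set" where
  "Fset psi = pauli_op n 1 ` (dstr ` Wset psi)"

lemma Sop_in_span_F:
  assumes "T \<subseteq> {..<N}"
  shows "Sop psi T \<in> CV.span (Fset psi)"
proof (cases "ancv psi T = 0")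
  case True
  then have "Sop psi T = 0" unfolding Sop_pauli[OF assms] by (simp add: cscale_def fun_eq_iff)
  then show ?thesis by (simp add: CV.span_zero)
next
  case False
  then have "pauli_op n 1 (dstr T) \<in> Fset psi" unfolding Fset_def Wset_def using assms by auto
  then show ?thesis unfolding Sop_pauli[OF assms] by (intro CV.span_scale CV.span_base)
qed

lemma span_M_F: "CV.span (Mset psi) = CV.span (Fset psi)"
proof (subst CV.span_eq, intro conjI subsetI)
  fix x assume "x \<in> Mset psi"
  then obtain b where b: "b < 2 ^ N" "x = mu_op n m psi (Phi b)" unfolding Mset_def by auto
  show "x \<in> CV.span (Fset psi)" unfolding b(2) mu_spec[OF b(1)]
    by (intro CV.span_sum CV.span_scale Sop_in_span_F) auto
next
  fix x assume "x \<in> Fset psi"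
  then obtain T where T: "T \<in> Wset psi" "x = pauli_op n 1 (dstr T)" unfolding Fset_def by auto
  have Ts: "T \<subseteq> {..<N}" using T(1) unfolding Wset_def by auto
  have nz: "gc T * ancv psi T \<noteq> 0" using T(1) gT_rep(2)[OF Ts] unfolding Wset_def by auto
  have "x = cscale (1 / (gc T * ancv psi T)) (Sop psi T)"
    unfolding T(2) Sop_pauli[OF Ts] using nz by (simp add: cscale_def fun_eq_iff)
  also have "\<dots> \<in> CV.span (Mset psi)"
    unfolding Sop_spec[OF Ts] Mset_def by (intro CV.span_scale CV.span_sum CV.span_base) auto
  finally show "x \<in> CV.span (Mset psi)" .
qed

lemma dstr_canon: "k \<ge> n \<Longrightarrow> dstr T k = PI"
  unfolding dstr_def by simp

lemma pauli_hs_canon: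
  assumes "\<And>k. k \<ge> n \<Longrightarrow> d k = PI" "\<And>k. k \<ge> n \<Longrightarrow> d' k = PI"
  shows "(\<Sum>i<2 ^ n. \<Sum>j<2 ^ n. cnj (pauli_op n 1 d i j) * pauli_op n 1 d' i j) = (if d = d' then 2 ^ n else 0)"
proof (cases "d = d'")
  case True
  then show ?thesis using pauli_op_hs[of n 1 d 1 d'] by simp
next
  case False
  then obtain k where k: "d k \<noteq> d' k" by auto
  then have "k < n" using assms by (cases "k < n") auto
  then have "(\<Prod>k<n. if d k = d' k then 2 else 0) = (0::complex)" using k by (intro prod_zero) auto
  then show ?thesis using pauli_op_hs[of n 1 d 1 d'] False by simp
qed

lemma F_indep: "CV.independent (Fset psi)"
proof
  assume "CV.dependent (Fset psi)"
  then obtain t u where tu: "finite t" "t \<subseteq> Fset psi" "(\<Sum>v\<in>t. cscale (u v) v) = 0" "\<exists>v\<in>t. u v \<noteq> 0"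
    unfolding CV.dependent_explicit by blast
  then obtain v0 where v0: "v0 \<in> t" "u v0 \<noteq> 0" by auto
  have canon: "\<exists>d. v = pauli_op n 1 d \<and> (\<forall>k. k \<ge> n \<longrightarrow> d k = PI)" if "v \<in> Fset psi" for v
    using that unfolding Fset_def by (auto simp: dstr_canon)
  have "v0 \<in> Fset psi" using v0(1) tu(2) by auto
  then obtain d0 where d0: "v0 = pauli_op n 1 d0" "\<forall>k. k \<ge> n \<longrightarrow> d0 k = PI" using canon by blast
  have hs: "(\<Sum>i<2 ^ n. \<Sum>j<2 ^ n. cnj (v0 i j) * v i j) = (if v = v0 then 2 ^ n else 0)" if "v \<in> t" for v
  proof -
    have "v \<in> Fset psi" using that tu(2) by auto
    then obtain d where d: "v = pauli_op n 1 d" "\<forall>k. k \<ge> n \<longrightarrow> d k = PI" using canon by blast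
    have "(\<Sum>i<2 ^ n. \<Sum>j<2 ^ n. cnj (v0 i j) * v i j) = (if d0 = d then 2 ^ n else 0)"
      unfolding d0(1) d(1) using d0(2) d(2) by (intro pauli_hs_canon) auto
    moreover have "d0 = d \<longleftrightarrow> v = v0" unfolding d0(1) d(1)
    proof
      assume "pauli_op n 1 d = pauli_op n 1 d0"
      then have "\<forall>k<n. d k = d0 k" using pauli_unique[of n 1 d 1 d0] by simp
      then show "d0 = d" using d0(2) d(2) by (intro ext) (metis not_less)
    qed simp
    ultimately show ?thesis by simp
  qed
  have "0 = (\<Sum>i<2 ^ n. \<Sum>j<2 ^ n. cnj (v0 i j) * (\<Sum>v\<in>t. cscale (u v) v) i j)"
    unfolding tu(3) by simp
  also have "\<dots> = (\<Sum>v\<in>t. u v * (\<Sum>i<2 ^ n. \<Sum>j<2 ^ n. cnj (v0 i j) * v i j))"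
    unfolding sum_cscale_apply
    by (simp add: sum_distrib_left sum.swap[of _ t] mult_ac)
  also have "\<dots> = (\<Sum>v\<in>t. if v = v0 then u v * 2 ^ n else 0)"
    using hs by (intro sum.cong refl) auto
  also have "\<dots> = u v0 * 2 ^ n" using v0(1) tu(1) by simp
  finally show False using v0(2) by simp
qed

end

context stab
begin

lemma triv_empty:
  assumes "T \<subseteq> {..<N}" "\<forall>k<N. gs T k = PI"
  shows "T = {}"
proof (rule ccontr)
  assume ne: "T \<noteq> {}"
  have "(\<Sum>i<2 ^ N. gT T i i) = gc T * (\<Prod>k<N. if gs T k = PI then 2 else 0)"
    using gT_rep(1)[OF assms(1)] pauli_op_trace by simp
  also have "\<dots> = gc T * 2 ^ N" using assms(2) by simp
  finally have "gc T * 2 ^ N = 0" using trace_gT_zero[OF assms(1) ne] by simp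
  then show False using gT_rep(2)[OF assms(1)] by auto
qed

lemma gs_empty: "k < N \<Longrightarrow> gs {} k = PI"
proof -
  assume k: "k < N"
  have "pauli_op N 1 (\<lambda>_. PI) = pauli_op N (gc {}) (gs {})" using gT_rep(1)[of "{}"] gT_empty ident_pauli by simp
  then show ?thesis using pauli_unique[of N 1 "\<lambda>_. PI" "gc {}" "gs {}"] k by auto
qed

lemma empty_AA: "{} \<in> AA"
  unfolding AA_def anc_triv_def using gs_empty by auto

lemma dstr_empty: "dstr {} = (\<lambda>_. PI)"
  unfolding dstr_def using gs_empty by (intro ext) auto

lemma dstr_inj: "inj_on dstr AA"
proof (rule inj_onI)
  fix T T' assume TT: "T \<in> AA" "T' \<in> AA" and eq: "dstr T = dstr T'"
  have s: "T \<subseteq> {..<N}" "T' \<subseteq> {..<N}" using TT unfolding AA_def by auto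
  have "\<forall>k<N. gs (sdiff T T') k = PI"
  proof (intro allI impI)
    fix k assume k: "k < N"
    show "gs (sdiff T T') k = PI"
    proof (cases "k < m")
      case True
      then show ?thesis using gs_sdiff[OF s] k TT unfolding AA_def anc_triv_def by auto
    next
      case False
      then obtain j where j0: "k = m + j" using le_Suc_ex[of m k] by auto
      then have j: "k = m + j" "j < n" using k by auto
      have "gs T k = gs T' k" using fun_cong[OF eq, of j] j unfolding dstr_def by simp
      then show ?thesis using gs_sdiff[OF s] k by simp
    qed
  qed
  then have "sdiff T T' = {}" using triv_empty sdiff_sub[OF s] by blast
  then show "T = T'" unfolding sdiff_def by auto
qed

lemma W_closed:
  assumes "T \<in> Wset psi" "T' \<in> AA"
  shows "sdiff T T' \<in> Wset psi"
proof -
  have s: "T \<subseteq> {..<N}" "T' \<subseteq> {..<N}" using assms unfolding AA_def Wset_def by auto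
  have "pauli_op m 1 (gs (sdiff T T')) = pauli_op m 1 (gs T)"
    using gs_sdiff[OF s] assms(2) unfolding AA_def anc_triv_def by (intro pauli_op_cong) auto
  then have "ancv psi (sdiff T T') = ancv psi T" unfolding ancv_def by simp
  then show ?thesis using assms(1) sdiff_sub[OF s] unfolding Wset_def by auto
qed

lemma card_F: "card (Fset psi) = card (dstr ` Wset psi)"
  unfolding Fset_def
proof (rule card_image, rule inj_onI)
  fix d d' assume "d \<in> dstr ` Wset psi" "d' \<in> dstr ` Wset psi" and eq: "pauli_op n 1 d = pauli_op n 1 d'"
  then have c: "\<forall>k. k \<ge> n \<longrightarrow> d k = PI" "\<forall>k. k \<ge> n \<longrightarrow> d' k = PI" by (auto simp: dstr_canon)
  have "\<forall>k<n. d k = d' k" using pauli_unique[OF eq] by simp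
  then show "d = d'"
  proof (intro ext)
    fix k show "d k = d' k" using c \<open>\<forall>k<n. d k = d' k\<close> by (cases "k < n") auto
  qed
qed

lemma card_dvd: "card AA dvd card (dstr ` Wset psi)"
proof -
  have "card (dstr ` AA) dvd card (dstr ` Wset psi)"
  proof (rule orbit_dvd[where f = pmstr and e = "\<lambda>_. PI"])
    show "pmstr (pmstr x y) z = pmstr x (pmstr y z)" for x y z unfolding pmstr_def by (simp add: pm_assoc)
    show "pmstr x y = pmstr y x" for x y unfolding pmstr_def by (simp add: pm_comm)
    show "pmstr x x = (\<lambda>_. PI)" for x unfolding pmstr_def by simp
    show "pmstr x (\<lambda>_. PI) = x" for x unfolding pmstr_def by simp
    show "finite (dstr ` AA)" using AA_fin by simp
    show "(\<lambda>_. PI) \<in> dstr ` AA" using empty_AA dstr_empty by force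
    show "pmstr h h' \<in> dstr ` AA" if hh: "h \<in> dstr ` AA" "h' \<in> dstr ` AA" for h h'
    proof -
      obtain T where T1: "T \<in> AA" "h = dstr T" using hh(1) by blast
      obtain T' where T2: "T' \<in> AA" "h' = dstr T'" using hh(2) by blast
      have T: "T \<in> AA" "T' \<in> AA" "h = dstr T" "h' = dstr T'" using T1 T2 by auto
      have s: "T \<subseteq> {..<N}" "T' \<subseteq> {..<N}" using T unfolding AA_def by auto
      have "pmstr h h' = dstr (sdiff T T')" unfolding T(3,4) dstr_sdiff[OF s] pmstr_def ..
      then show ?thesis using AA_sdiff[OF T(1,2)] by auto
    qed
    show "finite (dstr ` Wset psi)" unfolding Wset_def by simp
    show "pmstr d h \<in> dstr ` Wset psi" if dh: "d \<in> dstr ` Wset psi" "h \<in> dstr ` AA" for d h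
    proof -
      obtain T where T1: "T \<in> Wset psi" "d = dstr T" using dh(1) by blast
      obtain T' where T2: "T' \<in> AA" "h = dstr T'" using dh(2) by blast
      have T: "T \<in> Wset psi" "T' \<in> AA" "d = dstr T" "h = dstr T'" using T1 T2 by auto
      have s: "T \<subseteq> {..<N}" "T' \<subseteq> {..<N}" using T unfolding AA_def Wset_def by auto
      have "pmstr d h = dstr (sdiff T T')" unfolding T(3,4) dstr_sdiff[OF s] pmstr_def ..
      then show ?thesis using W_closed[OF T(1,2)] by auto
    qed
  qed
  then show ?thesis using card_image[OF dstr_inj] by simp
qed

lemma span_dim_M: "span_dim (Mset psi) = card (dstr ` Wset psi)"
proof -
  have "span_dim (Mset psi) = CV.dim (Mset psi)" unfolding span_dim_def by simp
  also have "\<dots> = CV.dim (CV.span (Mset psi))" by simp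
  also have "\<dots> = CV.dim (CV.span (Fset psi))" unfolding span_M_F ..
  also have "\<dots> = card (Fset psi)" using CV.dim_span_eq_card_independent[OF F_indep] .
  finally show ?thesis using card_F by simp
qed

lemma card_AA_p:
  assumes "entanglement_entropy n m (Phi 0) = real p"
  shows "card AA = 2 ^ (n - p)"
proof -
  define x where "x = real (card AA) / 2 ^ n"
  have x: "x > 0" unfolding x_def using card_AA_pos by simp
  have "- log 2 x = real p" using assms entropy_AA[of 0] unfolding x_def by simp
  then have lx: "log 2 x = - real p" by simp
  have "x = 2 powr (log 2 x)" using x by simp
  then have "x = 2 powr (- real p)" unfolding lx .
  then have "x * 2 ^ p = 1" by (simp add: powr_minus powr_realpow divide_simps)
  then have "real (card AA) * 2 ^ p = 2 ^ n" unfolding x_def by (simp add: field_simps)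
  then have e: "card AA * 2 ^ p = 2 ^ n" by (metis of_nat_eq_iff of_nat_mult of_nat_numeral of_nat_power)
  have pn: "p \<le> n"
  proof (rule ccontr)
    assume "\<not> p \<le> n"
    then have "2 ^ n < (2::nat) ^ p" by simp
    also have "\<dots> \<le> card AA * 2 ^ p" using card_AA_pos by simp
    finally show False using e by simp
  qed
  then have "(2::nat) ^ n = 2 ^ (n - p) * 2 ^ p" by (simp add: power_add[symmetric])
  then show ?thesis using e by simp
qed

end

theorem corollary1:
  fixes n m p :: nat and Phi :: "nat \<Rightarrow> nat \<Rightarrow> complex" and psi :: "nat \<Rightarrow> complex"
  assumes "stabilizer_basis (n + m) Phi"
    and "is_vec m psi" and "cinner m psi psi = 1"
    and "\<forall>b<2 ^ (n + m). entanglement_entropy n m (Phi b) = real p"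
  shows "\<exists>k::nat. span_dim {mu_op n m psi (Phi b) | b. b < 2 ^ (n + m)} = k * 2 ^ (n - p)"
proof -
  obtain P where P: "(\<forall>l<n + m. is_pauli (n + m) (P l))
        \<and> (\<forall>l<n + m. \<forall>l'<n + m. mmult (n + m) (P l) (P l') = mmult (n + m) (P l') (P l))
        \<and> independent_paulis (n + m) (n + m) P
        \<and> (\<forall>b<2 ^ (n + m). is_vec (n + m) (Phi b))
        \<and> (\<forall>b<2 ^ (n + m). \<forall>b'<2 ^ (n + m). cinner (n + m) (Phi b) (Phi b') = (if b = b' then 1 else 0))
        \<and> (\<forall>b<2 ^ (n + m). \<forall>l<n + m. \<exists>lam. mvmult (n + m) (P l) (Phi b) = (\<lambda>i. lam * Phi b i))"
    using assms(1) unfolding stabilizer_basis_def by (rule exE)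
  have "stab n m Phi P"
  proof (unfold_locales)
    show "\<forall>l<n + m. is_pauli (n + m) (P l)" using P by (rule conjunct1)
    show "independent_paulis (n + m) (n + m) P" using P by (elim conjE)
    show "\<forall>b<2 ^ (n + m). is_vec (n + m) (Phi b)" using P by (elim conjE)
    show "\<forall>b<2 ^ (n + m). \<forall>b'<2 ^ (n + m). cinner (n + m) (Phi b) (Phi b') = (if b = b' then 1 else 0)" using P by (elim conjE)
    show "\<forall>b<2 ^ (n + m). \<forall>l<n + m. \<exists>lam. mvmult (n + m) (P l) (Phi b) = (\<lambda>i. lam * Phi b i)" using P by (elim conjE)
  qed
  then interpret S: stab n m Phi P .
  have e0: "entanglement_entropy n m (Phi 0) = real p" using assms(4) by simp
  have cAA: "card S.AA = 2 ^ (n - p)" by (rule S.card_AA_p[OF e0])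
  obtain k where "card (S.dstr ` S.Wset psi) = card S.AA * k"
    using S.card_dvd[of psi] by (rule dvdE)
  then have "span_dim (S.Mset psi) = k * 2 ^ (n - p)" using S.span_dim_M[of psi] cAA by simp
  then show ?thesis unfolding S.Mset_def by blast
qed

end
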